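(* Let $K$ be an algebraically closed field of characteristic zero and $e_1\in 3+2\mathbb{N}$. Let $S\subset K^3$ be the surface $x_3^2+(x_1^{e_1}-x_2^2)x_1=0$, $S'\subset K^3$ the surface $\alpha^{2e_1}-4\beta\gamma=0$, $\sigma(\alpha,\beta,\gamma)=(-\alpha,\gamma,\beta)$ on $S'$ with $\sigma^*(f)=f\circ\sigma$, and identify $\mathcal{O}(S)$ with a subring of $\mathcal{O}(S')$ via the dominant morphism $F(\alpha,\beta,\gamma)=(\alpha^2,\beta+\gamma,\alpha(\beta-\gamma))$. Then for every $K$-derivation $D$ of $\mathcal{O}(S)$ there exists a unique derivation $D'$ of $\mathcal{O}(S')$ commuting with $\sigma^*$ and coinciding with $D$ on $\mathcal{O}(S)$. Moreover, if $D$ is weighted homogeneous on $S$ then $D'$ is weighted homogeneous on $S'$.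
   Context: $S$ is graded by the weights $2,e_1,e_1+1$ on $x_1,x_2,x_3$, and $S'$ by the weights $1,e_1,e_1$ on $\alpha,\beta,\gamma$. A derivation is weighted homogeneous (of degree $r$) if it sends homogeneous elements of degree $m$ to homogeneous elements of degree $m+r$. *)

theory Defs
  imports "HOL-Computational_Algebra.Polynomial"
begin

type_synonym 'a pt3 = "'a \<times> 'a \<times> 'a"

definition fin_supp :: "(nat \<times> nat \<times> nat \<Rightarrow> 'a::zero) \<Rightarrow> bool" where
  "fin_supp c \<longleftrightarrow> finite {k. c k \<noteq> 0}"

definition peval3 :: "(nat \<times> nat \<times> nat \<Rightarrow> 'a::comm_ring_1) \<Rightarrow> 'a pt3 \<Rightarrow> 'a" where
  "peval3 c p = (\<Sum>(i,j,k)\<in>{k. c k \<noteq> 0}. c (i,j,k) * fst p ^ i * fst (snd p) ^ j * snd (snd p) ^ k)"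

text \<open>The coordinate ring of a subset S of K^3: polynomial functions restricted to S
  (extended by 0 outside S, so that equal elements are equal as HOL functions).\<close>

definition restr :: "'a pt3 set \<Rightarrow> ('a pt3 \<Rightarrow> 'a::zero) \<Rightarrow> 'a pt3 \<Rightarrow> 'a" where
  "restr S g = (\<lambda>p. if p \<in> S then g p else 0)"

definition coord_ring :: "'a::comm_ring_1 pt3 set \<Rightarrow> ('a pt3 \<Rightarrow> 'a) set" where
  "coord_ring S = {restr S (peval3 c) | c. fin_supp c}"

definition whom :: "'a::comm_ring_1 pt3 set \<Rightarrow> nat \<times> nat \<times> nat \<Rightarrow> int \<Rightarrow> ('a pt3 \<Rightarrow> 'a) \<Rightarrow> bool" where
  "whom S w m f \<longleftrightarrow> (\<exists>c. fin_supp c \<and>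
      (\<forall>i j k. c (i,j,k) \<noteq> 0 \<longrightarrow> int (fst w * i + fst (snd w) * j + snd (snd w) * k) = m) \<and>
      f = restr S (peval3 c))"

definition is_derivation :: "'a::comm_ring_1 pt3 set \<Rightarrow> (('a pt3 \<Rightarrow> 'a) \<Rightarrow> ('a pt3 \<Rightarrow> 'a)) \<Rightarrow> bool" where
  "is_derivation S D \<longleftrightarrow>
     (\<forall>f\<in>coord_ring S. D f \<in> coord_ring S) \<and>
     (\<forall>f\<in>coord_ring S. \<forall>g\<in>coord_ring S. D (\<lambda>p. f p + g p) = (\<lambda>p. D f p + D g p)) \<and>
     (\<forall>a. \<forall>f\<in>coord_ring S. D (\<lambda>p. a * f p) = (\<lambda>p. a * D f p)) \<and>
     (\<forall>f\<in>coord_ring S. \<forall>g\<in>coord_ring S. D (\<lambda>p. f p * g p) = (\<lambda>p. f p * D g p + g p * D f p))"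

definition whom_derivation :: "'a::comm_ring_1 pt3 set \<Rightarrow> nat \<times> nat \<times> nat \<Rightarrow> (('a pt3 \<Rightarrow> 'a) \<Rightarrow> ('a pt3 \<Rightarrow> 'a)) \<Rightarrow> bool" where
  "whom_derivation S w D \<longleftrightarrow> (\<exists>r::int. \<forall>m f. whom S w m f \<longrightarrow> whom S w (m + r) (D f))"

definition surfS :: "nat \<Rightarrow> 'a::comm_ring_1 pt3 set" where
  "surfS e1 = {(x1,x2,x3). x3^2 + (x1^e1 - x2^2) * x1 = 0}"

definition surfS' :: "nat \<Rightarrow> 'a::comm_ring_1 pt3 set" where
  "surfS' e1 = {(a,b,c). a^(2*e1) - 4*b*c = 0}"

definition sigma :: "'a::comm_ring_1 pt3 \<Rightarrow> 'a pt3" where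
  "sigma = (\<lambda>(a,b,c). (-a, c, b))"

definition mapF :: "'a::comm_ring_1 pt3 \<Rightarrow> 'a pt3" where
  "mapF = (\<lambda>(a,b,c). (a^2, b + c, a * (b - c)))"

definition sigma_star :: "nat \<Rightarrow> ('a::comm_ring_1 pt3 \<Rightarrow> 'a) \<Rightarrow> 'a pt3 \<Rightarrow> 'a" where
  "sigma_star e1 f = restr (surfS' e1) (f \<circ> sigma)"

definition F_star :: "nat \<Rightarrow> ('a::comm_ring_1 pt3 \<Rightarrow> 'a) \<Rightarrow> 'a pt3 \<Rightarrow> 'a" where
  "F_star e1 f = restr (surfS' e1) (f \<circ> mapF)"

end

theory Submission
  imports Defs
begin


inductive PH :: "nat \<times> nat \<times> nat \<Rightarrow> int \<Rightarrow> ('a::comm_ring_1 pt3 \<Rightarrow> 'a) \<Rightarrow> bool"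
  for w :: "nat \<times> nat \<times> nat" where
  zero: "PH w m (\<lambda>_. 0)"
| const: "PH w 0 (\<lambda>_. k)"
| x1: "PH w (int (fst w)) (\<lambda>p. fst p)"
| x2: "PH w (int (fst (snd w))) (\<lambda>p. fst (snd p))"
| x3: "PH w (int (snd (snd w))) (\<lambda>p. snd (snd p))"
| add: "PH w m f \<Longrightarrow> PH w m g \<Longrightarrow> PH w m (\<lambda>p. f p + g p)"
| mul: "PH w m f \<Longrightarrow> PH w n g \<Longrightarrow> PH w (m + n) (\<lambda>p. f p * g p)"

abbreviation PF :: "('a::comm_ring_1 pt3 \<Rightarrow> 'a) \<Rightarrow> bool" where
  "PF f \<equiv> PH (0,0,0) 0 f"

lemma PH_PF: "PH w m f \<Longrightarrow> PF f"
proof (induction rule: PH.induct)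
  case (mul m f n g) then show ?case using PH.mul[of "(0,0,0)" 0 f 0 g] by simp
qed (auto intro: PH.intros PH.x1[of "(0,0,0)", simplified] PH.x2[of "(0,0,0)", simplified] PH.x3[of "(0,0,0)", simplified])

lemma PH_const': "m = 0 \<or> k = 0 \<Longrightarrow> PH w m (\<lambda>_. k)"
  using PH.const[of w k] PH.zero[of w m] by auto

lemma PH_x1: "m = int (fst w) \<Longrightarrow> PH w m (\<lambda>p. fst p)" using PH.x1 by simp
lemma PH_x2: "m = int (fst (snd w)) \<Longrightarrow> PH w m (\<lambda>p. fst (snd p))" using PH.x2 by simp
lemma PH_x3: "m = int (snd (snd w)) \<Longrightarrow> PH w m (\<lambda>p. snd (snd p))" using PH.x3 by simp
lemma PH_mul': "PH w m f \<Longrightarrow> PH w n g \<Longrightarrow> k = m + n \<Longrightarrow> PH w k (\<lambda>p. f p * g p)"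
  using PH.mul by blast

lemma PH_smult: "PH w m f \<Longrightarrow> PH w m (\<lambda>p. c * f p)"
  using PH_mul'[OF PH.const[of w c]] by auto

lemma PH_neg: "PH w m f \<Longrightarrow> PH w m (\<lambda>p. - f p)"
  using PH_smult[of w m f "-1"] by simp

lemma PH_sub: "PH w m f \<Longrightarrow> PH w m g \<Longrightarrow> PH w m (\<lambda>p. f p - g p)"
  using PH.add[OF _ PH_neg[of w m g]] by simp

lemma PH_pow: "PH w m f \<Longrightarrow> k = int n * m \<Longrightarrow> PH w k (\<lambda>p. f p ^ n)"
proof (induction n arbitrary: k)
  case 0 then show ?case using PH.const[of w 1] by simp
next
  case (Suc n)
  have "PH w (m + int n * m) (\<lambda>p. f p * f p ^ n)"
    using PH.mul[OF Suc.prems(1) Suc.IH[OF Suc.prems(1) refl]] .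
  then show ?case using Suc.prems by (simp add: algebra_simps)
qed

lemma PH_sum: "finite A \<Longrightarrow> (\<And>i. i \<in> A \<Longrightarrow> PH w m (g i)) \<Longrightarrow> PH w m (\<lambda>p. \<Sum>i\<in>A. g i p)"
proof (induction A rule: finite_induct)
  case empty then show ?case using PH.zero by simp
next
  case (insert x F) then show ?case using PH.add[of w m "g x" "\<lambda>p. \<Sum>i\<in>F. g i p"] by simp
qed

lemma PF_curve:
  fixes f :: "'a::comm_ring_1 pt3 \<Rightarrow> 'a"
  assumes "PH w m f"
  shows "\<exists>r. \<forall>t. f (poly x t, poly y t, poly z t) = poly r t"
  using assms
proof (induction rule: PH.induct)
  case (zero m) then show ?case by (intro exI[of _ 0]) simp
next
  case (const k) then show ?case by (intro exI[of _ "[:k:]"]) simp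
next
  case x1 then show ?case by (intro exI[of _ x]) simp
next
  case x2 then show ?case by (intro exI[of _ y]) simp
next
  case x3 then show ?case by (intro exI[of _ z]) simp
next
  case (add m f g)
  then obtain r1 r2 where "\<forall>t. f (poly x t, poly y t, poly z t) = poly r1 t"
     "\<forall>t. g (poly x t, poly y t, poly z t) = poly r2 t" by blast
  then show ?case by (intro exI[of _ "r1 + r2"]) simp
next
  case (mul m f n g)
  then obtain r1 r2 where "\<forall>t. f (poly x t, poly y t, poly z t) = poly r1 t"
     "\<forall>t. g (poly x t, poly y t, poly z t) = poly r2 t" by blast
  then show ?case by (intro exI[of _ "r1 * r2"]) simp
qed

lemma poly_zero_at_0:
  fixes r :: "'a::field_char_0 poly"
  assumes "\<forall>t. t \<noteq> 0 \<longrightarrow> poly r t = 0"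
  shows "poly r 0 = 0"
proof (cases "r = 0")
  case False
  then have "finite {t. poly r t = 0}" by (rule poly_roots_finite)
  moreover have "UNIV - {0} \<subseteq> {t. poly r t = 0}" using assms by auto
  ultimately have "finite (UNIV - {0::'a})" by (rule rev_finite_subset)
  then have "finite (UNIV :: 'a set)" by simp
  then show ?thesis using infinite_UNIV_char_0 by blast
qed simp

lemma CL:
  fixes g :: "'a::field_char_0 pt3 \<Rightarrow> 'a"
  assumes "PH w m g" "\<forall>t. t \<noteq> 0 \<longrightarrow> g (poly x t, poly y t, poly z t) = 0"
  shows "g (poly x 0, poly y 0, poly z 0) = 0"
proof -
  obtain r where r: "\<forall>t. g (poly x t, poly y t, poly z t) = poly r t"
    using PF_curve[OF assms(1)] by blast
  have "poly r 0 = 0" using assms(2) r by (intro poly_zero_at_0) auto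
  then show ?thesis using r by simp
qed

definition crv :: "'a::comm_ring_1 pt3 \<Rightarrow> 'a pt3 \<Rightarrow> 'a \<Rightarrow> 'a pt3" where
  "crv p q t = (poly [:fst p, fst q:] t, poly [:fst (snd p), fst (snd q):] t, poly [:snd (snd p), snd (snd q):] t)"

definition DD :: "('a::comm_ring_1 pt3 \<Rightarrow> 'a) \<Rightarrow> 'a pt3 \<Rightarrow> 'a pt3 \<Rightarrow> 'a" where
  "DD f p q = coeff (THE r. \<forall>t. f (crv p q t) = poly r t) 1"

lemma crv_0: "crv p q 0 = p" by (simp add: crv_def)

lemma DD_I:
  fixes f :: "'a::field_char_0 pt3 \<Rightarrow> 'a"
  assumes "PH w m f" "\<forall>t. f (crv p q t) = poly r t"
  shows "DD f p q = coeff r 1"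
proof -
  have "(THE r. \<forall>t. f (crv p q t) = poly r t) = r"
  proof (rule the_equality)
    fix r' assume "\<forall>t. f (crv p q t) = poly r' t"
    then have "poly r' = poly r" using assms(2) by auto
    then show "r' = r" by (simp add: poly_eq_poly_eq_iff)
  qed (use assms in auto)
  then show ?thesis by (simp add: DD_def)
qed

lemma ex_r: "PH w m f \<Longrightarrow> \<exists>r. \<forall>t. f (crv p q t) = poly r t"
  unfolding crv_def by (rule PF_curve)

lemma coeff_mult_1: "coeff (a * b) 1 = coeff a 0 * coeff b 1 + coeff a 1 * coeff b 0"
  by (simp add: coeff_mult atMost_Suc algebra_simps)

lemma r_0: "\<forall>t. f (crv p q t) = poly r t \<Longrightarrow> coeff r 0 = f p"
  by (metis crv_0 poly_0_coeff_0)

context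
  fixes w :: "nat\<times>nat\<times>nat" and p q :: "'a::field_char_0 pt3"
begin

lemma DD_const: "DD (\<lambda>_. k) p q = (0::'a)"
  using DD_I[OF PH.const[of w k], where p=p and q=q and r="[:k:]"] by simp

lemma DD_x1: "DD (\<lambda>x. fst x) p q = fst q"
  using DD_I[OF PH.x1[of w], where p=p and q=q and r="[:fst p, fst q:]"] by (simp add: crv_def)
lemma DD_x2: "DD (\<lambda>x. fst (snd x)) p q = fst (snd q)"
  using DD_I[OF PH.x2[of w], where p=p and q=q and r="[:fst (snd p), fst (snd q):]"] by (simp add: crv_def)
lemma DD_x3: "DD (\<lambda>x. snd (snd x)) p q = snd (snd q)"
  using DD_I[OF PH.x3[of w], where p=p and q=q and r="[:snd (snd p), snd (snd q):]"] by (simp add: crv_def)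

end

lemma DD_add:
  fixes f :: "'a::field_char_0 pt3 \<Rightarrow> 'a"
  assumes "PH w m f" "PH w' m' g"
  shows "DD (\<lambda>x. f x + g x) p q = DD f p q + DD g p q"
proof -
  obtain r1 r2 where r: "\<forall>t. f (crv p q t) = poly r1 t" "\<forall>t. g (crv p q t) = poly r2 t"
    using ex_r[OF assms(1)] ex_r[OF assms(2)] by blast
  have "PF (\<lambda>x. f x + g x)" using PH.add[OF PH_PF[OF assms(1)] PH_PF[OF assms(2)]] .
  from DD_I[OF this, of p q "r1 + r2"] DD_I[OF assms(1) r(1)] DD_I[OF assms(2) r(2)] r
  show ?thesis by simp
qed

lemma DD_mul:
  fixes f :: "'a::field_char_0 pt3 \<Rightarrow> 'a"
  assumes "PH w m f" "PH w' m' g"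
  shows "DD (\<lambda>x. f x * g x) p q = f p * DD g p q + g p * DD f p q"
proof -
  obtain r1 r2 where r: "\<forall>t. f (crv p q t) = poly r1 t" "\<forall>t. g (crv p q t) = poly r2 t"
    using ex_r[OF assms(1)] ex_r[OF assms(2)] by blast
  have "PF (\<lambda>x. f x * g x)" using PH.mul[OF PH_PF[OF assms(1)] PH_PF[OF assms(2)]] by simp
  from DD_I[OF this, of p q "r1 * r2"] DD_I[OF assms(1) r(1)] DD_I[OF assms(2) r(2)] r r_0[OF r(1)] r_0[OF r(2)]
  show ?thesis using coeff_mult_1[of r1 r2] by (simp add: algebra_simps)
qed



lemma DD_smult:
  fixes f :: "'a::field_char_0 pt3 \<Rightarrow> 'a"
  assumes "PH w m f"
  shows "DD (\<lambda>x. c * f x) p q = c * DD f p q"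
  using DD_mul[OF PH.const[of w c] assms, of p q] DD_const[of c p q] by simp

lemma DD_neg:
  fixes f :: "'a::field_char_0 pt3 \<Rightarrow> 'a"
  assumes "PH w m f"
  shows "DD (\<lambda>x. - f x) p q = - DD f p q"
  using DD_smult[OF assms, of "-1" p q] by simp

lemma DD_sub:
  fixes f :: "'a::field_char_0 pt3 \<Rightarrow> 'a"
  assumes "PH w m f" "PH w' m' g"
  shows "DD (\<lambda>x. f x - g x) p q = DD f p q - DD g p q"
  using DD_add[OF assms(1) PH_neg[OF assms(2)], of p q] DD_neg[OF assms(2), of p q] by simp

lemma DD_pow:
  fixes f :: "'a::field_char_0 pt3 \<Rightarrow> 'a"
  assumes "PH w m f"
  shows "DD (\<lambda>x. f x ^ n) p q = of_nat n * f p ^ (n - 1) * DD f p q"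
proof (induction n)
  case 0 then show ?case using DD_const[of 1 p q] by simp
next
  case (Suc n)
  have "DD (\<lambda>x. f x ^ Suc n) p q = DD (\<lambda>x. f x * f x ^ n) p q" by simp
  also have "\<dots> = f p * DD (\<lambda>x. f x ^ n) p q + f p ^ n * DD f p q"
    by (rule DD_mul[OF assms PH_pow[OF assms refl]])
  also have "\<dots> = of_nat (Suc n) * f p ^ n * DD f p q"
    using Suc.IH by (cases n) (simp_all add: algebra_simps)
  finally show ?case by simp
qed

lemma PH_DD:
  fixes f :: "'a::field_char_0 pt3 \<Rightarrow> 'a"
  assumes "PH w m f" "PH w (int (fst w) + r) u" "PH w (int (fst (snd w)) + r) v"
    "PH w (int (snd (snd w)) + r) z"
  shows "PH w (m + r) (\<lambda>p. DD f p (u p, v p, z p))"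
  using assms(1)
proof (induction rule: PH.induct)
  case (zero m) then show ?case using DD_const[where 'a='a] PH.zero by simp
next
  case (const k) then show ?case using DD_const[where 'a='a] PH.zero by simp
next
  case x1 then show ?case using DD_x1[where 'a='a] assms(2) by simp
next
  case x2 then show ?case using DD_x2[where 'a='a] assms(3) by simp
next
  case x3 then show ?case using DD_x3[where 'a='a] assms(4) by simp
next
  case (add m f g) then show ?case using DD_add[OF add.hyps(1,2)] PH.add by simp
next
  case (mul m f n g)
  have "PH w (m + n + r) (\<lambda>p. f p * DD g p (u p, v p, z p))"
    by (rule PH_mul'[OF mul.hyps(1) mul.IH(2)]) simp
  moreover have "PH w (m + n + r) (\<lambda>p. g p * DD f p (u p, v p, z p))"
    by (rule PH_mul'[OF mul.hyps(2) mul.IH(1)]) simp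
  ultimately show ?case using DD_mul[OF mul.hyps(1,2)] PH.add by simp
qed

lemma PF_DD:
  fixes f :: "'a::field_char_0 pt3 \<Rightarrow> 'a"
  assumes "PF f" "PF u" "PF v" "PF z"
  shows "PF (\<lambda>p. DD f p (u p, v p, z p))"
  using PH_DD[OF assms(1), of 0 u v z] assms by simp

lemma PH_comp:
  fixes f :: "'a::comm_ring_1 pt3 \<Rightarrow> 'a"
  assumes "PH w m f" "PH w' (int (fst w)) G1" "PH w' (int (fst (snd w))) G2"
    "PH w' (int (snd (snd w))) G3"
  shows "PH w' m (\<lambda>x. f (G1 x, G2 x, G3 x))"
  using assms(1)
proof (induction rule: PH.induct)
  case (zero m) then show ?case by (rule PH.zero)
next
  case (const k) then show ?case by (rule PH.const)
next
  case x1 then show ?case using assms(2) by simp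
next
  case x2 then show ?case using assms(3) by simp
next
  case x3 then show ?case using assms(4) by simp
next
  case (add m f g) then show ?case using PH.add[OF add.IH] by simp
next
  case (mul m f n g) then show ?case using PH.mul[OF mul.IH] by simp
qed

lemma PF_comp:
  fixes f :: "'a::comm_ring_1 pt3 \<Rightarrow> 'a"
  assumes "PF f" "PF G1" "PF G2" "PF G3"
  shows "PF (\<lambda>x. f (G1 x, G2 x, G3 x))"
  using PH_comp[of "(0,0,0)" 0 f "(0,0,0)" G1 G2 G3] assms by simp

lemma DD_chain:
  fixes f :: "'a::field_char_0 pt3 \<Rightarrow> 'a"
  assumes "PF f" "PF G1" "PF G2" "PF G3"
  shows "DD (\<lambda>x. f (G1 x, G2 x, G3 x)) p q
       = DD f (G1 p, G2 p, G3 p) (DD G1 p q, DD G2 p q, DD G3 p q)"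
  using assms(1)
proof (induction rule: PH.induct)
  case (zero m) then show ?case using DD_const[where 'a='a] by simp
next
  case (const k) then show ?case using DD_const[where 'a='a] by simp
next
  case x1 then show ?case using DD_x1[where 'a='a] by simp
next
  case x2 then show ?case using DD_x2[where 'a='a] by simp
next
  case x3 then show ?case using DD_x3[where 'a='a] by simp
next
  case (add m f g)
  have "PF (\<lambda>x. f (G1 x, G2 x, G3 x))" "PF (\<lambda>x. g (G1 x, G2 x, G3 x))"
    using PF_comp[OF PH_PF[OF add.hyps(1)] assms(2-4)] PF_comp[OF PH_PF[OF add.hyps(2)] assms(2-4)] by auto
  then show ?case using DD_add[OF add.hyps(1,2)] DD_add[OF \<open>PF (\<lambda>x. f (G1 x, G2 x, G3 x))\<close> \<open>PF (\<lambda>x. g (G1 x, G2 x, G3 x))\<close>] add.IH by simp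
next
  case (mul m f n g)
  have "PF (\<lambda>x. f (G1 x, G2 x, G3 x))" "PF (\<lambda>x. g (G1 x, G2 x, G3 x))"
    using PF_comp[OF PH_PF[OF mul.hyps(1)] assms(2-4)] PF_comp[OF PH_PF[OF mul.hyps(2)] assms(2-4)] by auto
  then show ?case using DD_mul[OF mul.hyps(1,2)] DD_mul[OF \<open>PF (\<lambda>x. f (G1 x, G2 x, G3 x))\<close> \<open>PF (\<lambda>x. g (G1 x, G2 x, G3 x))\<close>] mul.IH by simp
qed



fun mono :: "nat \<times> nat \<times> nat \<Rightarrow> 'a::comm_ring_1 pt3 \<Rightarrow> 'a" where
  "mono (i,j,k) p = fst p ^ i * fst (snd p) ^ j * snd (snd p) ^ k"

fun deg :: "nat \<times> nat \<times> nat \<Rightarrow> nat \<times> nat \<times> nat \<Rightarrow> nat" where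
  "deg w (i,j,k) = i * fst w + j * fst (snd w) + k * snd (snd w)"

fun tadd :: "nat \<times> nat \<times> nat \<Rightarrow> nat \<times> nat \<times> nat \<Rightarrow> nat \<times> nat \<times> nat" where
  "tadd (i,j,k) (i',j',k') = (i+i', j+j', k+k')"

lemma mono_tadd: "mono (tadd x y) p = mono x p * mono y p"
  by (cases x; cases y) (simp add: power_add algebra_simps)

lemma deg_tadd: "deg w (tadd x y) = deg w x + deg w y"
  by (cases x; cases y) (simp add: algebra_simps)

lemma peval3_alt: "peval3 c p = (\<Sum>x\<in>{k. c k \<noteq> 0}. c x * mono x p)"
  unfolding peval3_def by (rule sum.cong) (auto simp: mult.assoc)

lemma peval3_sup:
  assumes "finite A" "{k. c k \<noteq> 0} \<subseteq> A"
  shows "peval3 c p = (\<Sum>x\<in>A. c x * mono x p)"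
  unfolding peval3_alt by (rule sum.mono_neutral_left) (use assms in auto)

definition Hom :: "nat \<times> nat \<times> nat \<Rightarrow> int \<Rightarrow> ('a::comm_ring_1 pt3 \<Rightarrow> 'a) \<Rightarrow> bool" where
  "Hom w m f \<longleftrightarrow> (\<exists>c. fin_supp c \<and>
      (\<forall>i j k. c (i,j,k) \<noteq> 0 \<longrightarrow> int (fst w * i + fst (snd w) * j + snd (snd w) * k) = m) \<and>
      f = peval3 c)"

lemma Hom_alt: "Hom w m f \<longleftrightarrow> (\<exists>c. fin_supp c \<and>
      (\<forall>x. c x \<noteq> 0 \<longrightarrow> int (deg w x) = m) \<and> f = peval3 c)"
proof -
  have *: "(\<forall>i j k. c (i,j,k) \<noteq> 0 \<longrightarrow> int (fst w * i + fst (snd w) * j + snd (snd w) * k) = m)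
        \<longleftrightarrow> (\<forall>x. c x \<noteq> 0 \<longrightarrow> int (deg w x) = m)" for c :: "nat\<times>nat\<times>nat \<Rightarrow> 'a"
  proof
    assume H: "\<forall>i j k. c (i,j,k) \<noteq> 0 \<longrightarrow> int (fst w * i + fst (snd w) * j + snd (snd w) * k) = m"
    show "\<forall>x. c x \<noteq> 0 \<longrightarrow> int (deg w x) = m"
    proof (intro allI)
      fix x show "c x \<noteq> 0 \<longrightarrow> int (deg w x) = m"
        using H by (cases x) (simp add: mult.commute)
    qed
  next
    assume H: "\<forall>x. c x \<noteq> 0 \<longrightarrow> int (deg w x) = m"
    show "\<forall>i j k. c (i,j,k) \<noteq> 0 \<longrightarrow> int (fst w * i + fst (snd w) * j + snd (snd w) * k) = m"
      using H by (metis deg.simps mult.commute)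
  qed
  show ?thesis unfolding Hom_def using * by blast
qed

lemma Hom_zero: "Hom w m (\<lambda>_. 0)"
  unfolding Hom_alt
  by (rule exI[of _ "\<lambda>_. 0"]) (auto simp: fin_supp_def peval3_def)

lemma Hom_mono: "Hom w (int (deg w x)) (\<lambda>p. a * mono x p)"
  unfolding Hom_alt
proof (intro exI[of _ "\<lambda>y. if y = x then a else 0"] conjI)
  show "fin_supp (\<lambda>y. if y = x then a else 0)" unfolding fin_supp_def
    by (rule finite_subset[of _ "{x}"]) auto
  show "(\<lambda>p. a * mono x p) = peval3 (\<lambda>y. if y = x then a else 0)"
    by (rule ext, subst peval3_sup[of "{x}"]) auto
qed auto

lemma Hom_mono': "int (deg w x) = m \<or> a = 0 \<Longrightarrow> Hom w m (\<lambda>p. a * mono x p)"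
  using Hom_mono[of w x a] Hom_zero[of w m] by auto

lemma Hom_add:
  assumes "Hom w m f" "Hom w m g"
  shows "Hom w m (\<lambda>p. f p + g p)"
proof -
  obtain c1 c2 where c: "fin_supp c1" "\<forall>x. c1 x \<noteq> 0 \<longrightarrow> int (deg w x) = m" "f = peval3 c1"
    "fin_supp c2" "\<forall>x. c2 x \<noteq> 0 \<longrightarrow> int (deg w x) = m" "g = peval3 c2"
    using assms unfolding Hom_alt by blast
  let ?A = "{k. c1 k \<noteq> 0} \<union> {k. c2 k \<noteq> 0}"
  have fA: "finite ?A" using c unfolding fin_supp_def by auto
  show ?thesis unfolding Hom_alt
  proof (intro exI[of _ "\<lambda>x. c1 x + c2 x"] conjI allI impI)
    show "fin_supp (\<lambda>x. c1 x + c2 x)" unfolding fin_supp_def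
      by (rule finite_subset[OF _ fA]) auto
    show "int (deg w x) = m" if "c1 x + c2 x \<noteq> 0" for x
      using that c by (metis add.left_neutral add_0_right)
    show "(\<lambda>p. f p + g p) = peval3 (\<lambda>x. c1 x + c2 x)"
    proof
      fix p
      have "f p = (\<Sum>x\<in>?A. c1 x * mono x p)" using c(3) by (simp add: peval3_sup[OF fA])
      moreover have "g p = (\<Sum>x\<in>?A. c2 x * mono x p)" using c(6) by (simp add: peval3_sup[OF fA])
      moreover have "peval3 (\<lambda>x. c1 x + c2 x) p = (\<Sum>x\<in>?A. (c1 x + c2 x) * mono x p)"
        by (rule peval3_sup[OF fA]) auto
      ultimately show "f p + g p = peval3 (\<lambda>x. c1 x + c2 x) p"
        by (simp add: sum.distrib algebra_simps)
    qed
  qed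
qed

lemma Hom_sum: "finite A \<Longrightarrow> (\<And>i. i \<in> A \<Longrightarrow> Hom w m (g i)) \<Longrightarrow> Hom w m (\<lambda>p. \<Sum>i\<in>A. g i p)"
proof (induction A rule: finite_induct)
  case empty then show ?case using Hom_zero by simp
next
  case (insert x F) then show ?case using Hom_add[of w m "g x" "\<lambda>p. \<Sum>i\<in>F. g i p"] by simp
qed

lemma Hom_mul:
  assumes "Hom w m f" "Hom w n g"
  shows "Hom w (m + n) (\<lambda>p. f p * g p)"
proof -
  obtain c1 c2 where c: "fin_supp c1" "\<forall>x. c1 x \<noteq> 0 \<longrightarrow> int (deg w x) = m" "f = peval3 c1"
    "fin_supp c2" "\<forall>x. c2 x \<noteq> 0 \<longrightarrow> int (deg w x) = n" "g = peval3 c2"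
    using assms unfolding Hom_alt by blast
  let ?A = "{k. c1 k \<noteq> 0}" and ?B = "{k. c2 k \<noteq> 0}"
  have fin: "finite ?A" "finite ?B" using c unfolding fin_supp_def by auto
  have eq: "(\<lambda>p. f p * g p) = (\<lambda>p. \<Sum>x\<in>?A. \<Sum>y\<in>?B. (c1 x * c2 y) * mono (tadd x y) p)"
  proof
    fix p
    have "f p * g p = (\<Sum>x\<in>?A. c1 x * mono x p) * (\<Sum>y\<in>?B. c2 y * mono y p)"
      by (simp add: c(3,6) peval3_alt)
    also have "\<dots> = (\<Sum>x\<in>?A. \<Sum>y\<in>?B. (c1 x * mono x p) * (c2 y * mono y p))"
      by (rule sum_product)
    also have "\<dots> = (\<Sum>x\<in>?A. \<Sum>y\<in>?B. (c1 x * c2 y) * mono (tadd x y) p)"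
      by (simp only: mono_tadd mult_ac)
    finally show "f p * g p = (\<Sum>x\<in>?A. \<Sum>y\<in>?B. (c1 x * c2 y) * mono (tadd x y) p)" .
  qed
  have "Hom w (m + n) (\<lambda>p. \<Sum>x\<in>?A. \<Sum>y\<in>?B. (c1 x * c2 y) * mono (tadd x y) p)"
  proof (rule Hom_sum[OF fin(1)])
    fix x assume "x \<in> ?A"
    show "Hom w (m + n) (\<lambda>p. \<Sum>y\<in>?B. (c1 x * c2 y) * mono (tadd x y) p)"
    proof (rule Hom_sum[OF fin(2)])
      fix y assume "y \<in> ?B"
      show "Hom w (m + n) (\<lambda>p. (c1 x * c2 y) * mono (tadd x y) p)"
      proof (rule Hom_mono')
        have "c1 x \<noteq> 0" "c2 y \<noteq> 0" using \<open>x \<in> ?A\<close> \<open>y \<in> ?B\<close> by auto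
        then have "int (deg w x) = m" "int (deg w y) = n" using c(2) c(5) by blast+
        then show "int (deg w (tadd x y)) = m + n \<or> c1 x * c2 y = 0" by (simp add: deg_tadd)
      qed
    qed
  qed
  then show ?thesis using eq by simp
qed

lemma PH_Hom: "PH w m f \<Longrightarrow> Hom w m f"
proof (induction rule: PH.induct)
  case (zero m) then show ?case by (rule Hom_zero)
next
  case (const k) then show ?case using Hom_mono[of w "(0,0,0)" k] by simp
next
  case x1 then show ?case using Hom_mono[of w "(1,0,0)" 1] by simp
next
  case x2 then show ?case using Hom_mono[of w "(0,1,0)" 1] by simp
next
  case x3 then show ?case using Hom_mono[of w "(0,0,1)" 1] by simp
next
  case (add m f g) then show ?case using Hom_add by blast
next
  case (mul m f n g) then show ?case using Hom_mul by blast
qed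

lemma PH_mono: "PH w (int (deg w x)) (\<lambda>p. a * mono x p)"
proof (cases x)
  case (fields i j k)
  have "PH w (0 + int i * int (fst w) + int j * int (fst (snd w)) + int k * int (snd (snd w)))
     (\<lambda>p. a * fst p ^ i * fst (snd p) ^ j * snd (snd p) ^ k)"
  proof -
    have a: "PH w (int i * int (fst w)) (\<lambda>p. fst p ^ i)" by (rule PH_pow[OF PH.x1]) simp
    have b: "PH w (int j * int (fst (snd w))) (\<lambda>p. fst (snd p) ^ j)" by (rule PH_pow[OF PH.x2]) simp
    have c: "PH w (int k * int (snd (snd w))) (\<lambda>p. snd (snd p) ^ k)" by (rule PH_pow[OF PH.x3]) simp
    have "PH w (0 + int i * int (fst w)) (\<lambda>p. a * fst p ^ i)" by (rule PH.mul[OF PH.const a])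
    from PH.mul[OF this b] have "PH w (0 + int i * int (fst w) + int j * int (fst (snd w))) (\<lambda>p. a * fst p ^ i * fst (snd p) ^ j)" .
    from PH.mul[OF this c] show ?thesis .
  qed
  moreover have "int (deg w x) = 0 + int i * int (fst w) + int j * int (fst (snd w)) + int k * int (snd (snd w))"
    using fields by (simp add: algebra_simps)
  moreover have "(\<lambda>p. a * mono x p) = (\<lambda>p. a * fst p ^ i * fst (snd p) ^ j * snd (snd p) ^ k)"
    using fields by (simp add: mult.assoc)
  ultimately show ?thesis by simp
qed

lemma Hom_PH: "Hom w m f \<Longrightarrow> PH w m f"
proof -
  assume "Hom w m f"
  then obtain c where c: "fin_supp c" "\<forall>x. c x \<noteq> 0 \<longrightarrow> int (deg w x) = m" "f = peval3 c"
    unfolding Hom_alt by blast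
  have "PH w m (\<lambda>p. \<Sum>x\<in>{k. c k \<noteq> 0}. c x * mono x p)"
  proof (rule PH_sum)
    show "finite {k. c k \<noteq> 0}" using c(1) by (simp add: fin_supp_def)
    fix x assume "x \<in> {k. c k \<noteq> 0}"
    then have "int (deg w x) = m" using c(2) by blast
    then show "PH w m (\<lambda>p. c x * mono x p)" using PH_mono[of w x "c x"] by simp
  qed
  then show ?thesis using c(3) by (simp add: peval3_alt[abs_def])
qed

lemma Hom_iff_PH: "Hom w m f \<longleftrightarrow> PH w m f"
  using Hom_PH PH_Hom by blast

lemma whom_iff: "whom S w m f \<longleftrightarrow> (\<exists>g. PH w m g \<and> f = restr S g)"
proof
  assume "whom S w m f"
  then obtain c where c: "fin_supp c"
      "\<forall>i j k. c (i,j,k) \<noteq> 0 \<longrightarrow> int (fst w * i + fst (snd w) * j + snd (snd w) * k) = m"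
      "f = restr S (peval3 c)" unfolding whom_def by blast
  have "Hom w m (peval3 c)" unfolding Hom_def using c(1,2) by blast
  then show "\<exists>g. PH w m g \<and> f = restr S g" using c(3) Hom_PH by blast
next
  assume "\<exists>g. PH w m g \<and> f = restr S g"
  then obtain g where g: "PH w m g" "f = restr S g" by blast
  then obtain c where c: "fin_supp c"
      "\<forall>i j k. c (i,j,k) \<noteq> 0 \<longrightarrow> int (fst w * i + fst (snd w) * j + snd (snd w) * k) = m"
      "g = peval3 c" using PH_Hom[OF g(1)] unfolding Hom_def by blast
  show "whom S w m f" unfolding whom_def using c g(2) by blast
qed

lemma coord_ring_iff: "f \<in> coord_ring S \<longleftrightarrow> (\<exists>g. PF g \<and> f = restr S g)"
proof -
  have "f \<in> coord_ring S \<longleftrightarrow> whom S (0,0,0) 0 f" unfolding coord_ring_def whom_def by auto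
  then show ?thesis using whom_iff by blast
qed

lemma coord_vanish: "f \<in> coord_ring S \<Longrightarrow> p \<notin> S \<Longrightarrow> f p = 0"
  unfolding coord_ring_def restr_def by auto

lemma restr_coord: "f \<in> coord_ring S \<Longrightarrow> restr S f = f"
  unfolding restr_def using coord_vanish by fastforce

lemma restr_in: "PF g \<Longrightarrow> restr S g \<in> coord_ring S"
  using coord_ring_iff by blast



lemma restr_add: "restr S (\<lambda>p. f p + g p) = (\<lambda>p. restr S f p + restr S g p)"
  for f g :: "'a::comm_ring_1 pt3 \<Rightarrow> 'a"
  by (rule ext) (simp add: restr_def)
lemma restr_mul: "restr S (\<lambda>p. f p * g p) = (\<lambda>p. restr S f p * restr S g p)"
  for f g :: "'a::comm_ring_1 pt3 \<Rightarrow> 'a"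
  by (rule ext) (simp add: restr_def)
lemma restr_smult: "restr S (\<lambda>p. c * f p) = (\<lambda>p. c * restr S f p)"
  for f :: "'a::comm_ring_1 pt3 \<Rightarrow> 'a"
  by (rule ext) (simp add: restr_def)

lemma deriv_one:
  fixes D :: "('a::field_char_0 pt3 \<Rightarrow> 'a) \<Rightarrow> ('a pt3 \<Rightarrow> 'a)"
  assumes D: "is_derivation S D"
  shows "D (restr S (\<lambda>_. 1)) = (\<lambda>_. 0)"
proof
  fix p
  let ?o = "restr S (\<lambda>_. 1::'a)"
  have o: "?o \<in> coord_ring S" by (rule restr_in) (rule PH.const)
  have oo: "(\<lambda>p. ?o p * ?o p) = ?o" by (auto simp: restr_def)
  have "D ?o = (\<lambda>p. ?o p * D ?o p + ?o p * D ?o p)"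
    using D o unfolding is_derivation_def by (metis oo)
  then have "D ?o p = ?o p * D ?o p + ?o p * D ?o p" by metis
  moreover have "D ?o \<in> coord_ring S" using D o unfolding is_derivation_def by blast
  ultimately show "D ?o p = 0"
    by (cases "p \<in> S") (auto simp: restr_def coord_vanish)
qed

lemma deriv_formula:
  fixes D :: "('a::field_char_0 pt3 \<Rightarrow> 'a) \<Rightarrow> ('a pt3 \<Rightarrow> 'a)"
  assumes D: "is_derivation S D" and f: "PF f"
  shows "D (restr S f) = restr S (\<lambda>p. DD f p (D (restr S (\<lambda>p. fst p)) p,
            D (restr S (\<lambda>p. fst (snd p))) p, D (restr S (\<lambda>p. snd (snd p))) p))"
  using f
proof (induction rule: PH.induct)
  case (zero m)
  have o: "restr S (\<lambda>_. 1::'a) \<in> coord_ring S" by (rule restr_in) (rule PH.const)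
  have "restr S (\<lambda>_. 0::'a) = (\<lambda>p. 0 * restr S (\<lambda>_. 1) p)" by (auto simp: restr_def)
  then have "D (restr S (\<lambda>_. 0::'a)) = (\<lambda>p. 0 * D (restr S (\<lambda>_. 1)) p)"
    using D o unfolding is_derivation_def by metis
  then show ?case using DD_const[where 'a='a] by (simp add: restr_def)
next
  case (const k)
  have o: "restr S (\<lambda>_. 1::'a) \<in> coord_ring S" by (rule restr_in) (rule PH.const)
  have "restr S (\<lambda>_. k::'a) = (\<lambda>p. k * restr S (\<lambda>_. 1) p)" by (auto simp: restr_def)
  then have "D (restr S (\<lambda>_. k::'a)) = (\<lambda>p. k * D (restr S (\<lambda>_. 1)) p)"
    using D o unfolding is_derivation_def by metis
  then show ?case using DD_const[where 'a='a] deriv_one[OF D] by (simp add: restr_def)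
next
  case x1
  have "D (restr S (\<lambda>p. fst p)) \<in> coord_ring S"
    using D restr_in[OF PH_x1[of 0 "(0,0,0)"], where 'a='a] unfolding is_derivation_def by auto
  then show ?case using DD_x1[where 'a='a] restr_coord by (simp add: restr_coord)
next
  case x2
  have "D (restr S (\<lambda>p. fst (snd p))) \<in> coord_ring S"
    using D restr_in[OF PH_x2[of 0 "(0,0,0)"], where 'a='a] unfolding is_derivation_def by auto
  then show ?case using DD_x2[where 'a='a] restr_coord by (simp add: restr_coord)
next
  case x3
  have "D (restr S (\<lambda>p. snd (snd p))) \<in> coord_ring S"
    using D restr_in[OF PH_x3[of 0 "(0,0,0)"], where 'a='a] unfolding is_derivation_def by auto
  then show ?case using DD_x3[where 'a='a] restr_coord by (simp add: restr_coord)
next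
  case (add m f g)
  have fg: "PF f" "PF g" using add.hyps by (auto dest: PH_PF)
  have "D (restr S (\<lambda>p. f p + g p)) = (\<lambda>p. D (restr S f) p + D (restr S g) p)"
    using D restr_in[OF fg(1), of S] restr_in[OF fg(2), of S] unfolding is_derivation_def restr_add by blast
  then show ?case using add.IH DD_add[OF add.hyps(1,2)] by (auto simp: restr_def)
next
  case (mul m f n g)
  have fg: "PF f" "PF g" using mul.hyps by (auto dest: PH_PF)
  have "D (restr S (\<lambda>p. f p * g p)) = (\<lambda>p. restr S f p * D (restr S g) p + restr S g p * D (restr S f) p)"
    using D restr_in[OF fg(1), of S] restr_in[OF fg(2), of S] unfolding is_derivation_def restr_mul by blast
  then show ?case using mul.IH DD_mul[OF mul.hyps(1,2)] by (auto simp: restr_def)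
qed



lemma memS': "(a,b,c) \<in> surfS' e1 \<longleftrightarrow> a^(2*e1) = 4*b*c"
  by (simp add: surfS'_def)

lemma memS: "(a,b,c) \<in> surfS e1 \<longleftrightarrow> c^2 + (a^e1 - b^2) * a = 0"
  by (simp add: surfS_def)

lemma DenA:
  fixes g :: "'a::field_char_0 pt3 \<Rightarrow> 'a"
  assumes e: "e1 \<ge> 1" and g: "PH w m g"
    and H: "\<forall>p\<in>(surfS' e1 :: 'a pt3 set). fst p \<noteq> 0 \<longrightarrow> g p = 0"
  shows "\<forall>p\<in>(surfS' e1 :: 'a pt3 set). g p = 0"
proof
  fix p :: "'a pt3" assume p: "p \<in> surfS' e1"
  have z: "(0::'a)^(2*e1) = 0" using e by simp
  obtain a b c where abc: "p = (a,b,c)" by (cases p)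
  show "g p = 0"
  proof (cases "a = 0")
    case False then show ?thesis using H p abc by auto
  next
    case True
    then have bc: "4*b*c = 0" using p abc e z by (simp add: memS')
    show ?thesis
    proof (cases "b = 0")
      case False
      then have c0: "c = 0" using bc by simp
      have "g (poly [:0,1:] 0, poly [:b:] 0, poly (monom (1/(4*b)) (2*e1)) 0) = 0"
      proof (rule CL[OF g], intro allI impI)
        fix t :: 'a assume t: "t \<noteq> 0"
        have "(t, b, 1/(4*b) * t^(2*e1)) \<in> surfS' e1" using False by (simp add: memS')
        then show "g (poly [:0,1:] t, poly [:b:] t, poly (monom (1/(4*b)) (2*e1)) t) = 0"
          using H t by (auto simp: poly_monom)
      qed
      then show ?thesis using abc True c0 e using z by (simp add: poly_monom)
    next
      case b0: True
      show ?thesis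
      proof (cases "c = 0")
        case False
        have "g (poly [:0,1:] 0, poly (monom (1/(4*c)) (2*e1)) 0, poly [:c:] 0) = 0"
        proof (rule CL[OF g], intro allI impI)
          fix t :: 'a assume t: "t \<noteq> 0"
          have "(t, 1/(4*c) * t^(2*e1), c) \<in> surfS' e1" using False by (simp add: memS')
          then show "g (poly [:0,1:] t, poly (monom (1/(4*c)) (2*e1)) t, poly [:c:] t) = 0"
            using H t by (auto simp: poly_monom)
        qed
        then show ?thesis using abc True b0 e using z by (simp add: poly_monom)
      next
        case c0: True
        have "g (poly [:0,1:] 0, poly (monom (1/2) e1) 0, poly (monom (1/2) e1) 0) = 0"
        proof (rule CL[OF g], intro allI impI)
          fix t :: 'a assume t: "t \<noteq> 0"
          have "(t, 1/2 * t^e1, 1/2 * t^e1) \<in> surfS' e1"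
            by (simp add: memS' power_mult power2_eq_square[symmetric] power_mult_distrib[symmetric] mult.commute)
          then show "g (poly [:0,1:] t, poly (monom (1/2) e1) t, poly (monom (1/2) e1) t) = 0"
            using H t by (auto simp: poly_monom)
        qed
        moreover have "(0::'a)^e1 = 0" using e by simp
        ultimately show ?thesis using abc True b0 c0 e by (simp add: poly_monom)
      qed
    qed
  qed
qed

lemma DenB:
  fixes g :: "'a::field_char_0 pt3 \<Rightarrow> 'a"
  assumes e: "e1 \<ge> 1" and g: "PH w m g"
    and H: "\<forall>p\<in>(surfS' e1 :: 'a pt3 set). fst (snd p) \<noteq> 0 \<longrightarrow> g p = 0"
  shows "\<forall>p\<in>(surfS' e1 :: 'a pt3 set). g p = 0"
proof
  fix p :: "'a pt3" assume p: "p \<in> surfS' e1"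
  have z: "(0::'a)^(2*e1) = 0" using e by simp
  obtain a b c where abc: "p = (a,b,c)" by (cases p)
  show "g p = 0"
  proof (cases "b = 0")
    case False then show ?thesis using H p abc by auto
  next
    case True
    then have a0: "a = 0" using p abc e z by (simp add: memS')
    show ?thesis
    proof (cases "c = 0")
      case False
      have "g (poly [:0,1:] 0, poly (monom (1/(4*c)) (2*e1)) 0, poly [:c:] 0) = 0"
      proof (rule CL[OF g], intro allI impI)
        fix t :: 'a assume t: "t \<noteq> 0"
        have "(t, 1/(4*c) * t^(2*e1), c) \<in> surfS' e1" using False by (simp add: memS')
        then show "g (poly [:0,1:] t, poly (monom (1/(4*c)) (2*e1)) t, poly [:c:] t) = 0"
          using H t False by (auto simp: poly_monom)
      qed
      then show ?thesis using abc True a0 e using z by (simp add: poly_monom)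
    next
      case c0: True
      have "g (poly 0 0, poly [:0,1:] 0, poly 0 0) = 0"
      proof (rule CL[OF g], intro allI impI)
        fix t :: 'a assume t: "t \<noteq> 0"
        have "(0, t, 0) \<in> surfS' e1" using e by (simp add: memS')
        then show "g (poly 0 t, poly [:0,1:] t, poly 0 t) = 0"
          using H t by auto
      qed
      then show ?thesis using abc True a0 c0 by simp
    qed
  qed
qed



lemma PF_add: "PF f \<Longrightarrow> PF g \<Longrightarrow> PF (\<lambda>p. f p + g p)" by (rule PH.add)
lemma PF_mul: "PF f \<Longrightarrow> PF g \<Longrightarrow> PF (\<lambda>p. f p * g p)" using PH.mul[of "(0,0,0)" 0 f 0 g] by simp
lemma PF_sub: "PF f \<Longrightarrow> PF g \<Longrightarrow> PF (\<lambda>p. f p - g p)" by (rule PH_sub)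
lemma PF_neg: "PF f \<Longrightarrow> PF (\<lambda>p. - f p)" by (rule PH_neg)
lemma PF_pow: "PF f \<Longrightarrow> PF (\<lambda>p. f p ^ n)" using PH_pow[of "(0,0,0)" 0 f 0 n] by simp
lemma PF_const: "PF (\<lambda>p. k)" by (rule PH.const)
lemma PF_x1: "PF (\<lambda>p. fst p)" using PH.x1[of "(0,0,0)"] by simp
lemma PF_x2: "PF (\<lambda>p. fst (snd p))" using PH.x2[of "(0,0,0)"] by simp
lemma PF_x3: "PF (\<lambda>p. snd (snd p))" using PH.x3[of "(0,0,0)"] by simp

lemmas PF_intros = PF_add PF_mul PF_sub PF_neg PF_pow PF_x1 PF_x2 PF_x3 PF_const

definition hh :: "nat \<Rightarrow> 'a::comm_ring_1 pt3 \<Rightarrow> 'a" where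
  "hh e1 p = fst p ^ (2*e1) - 4 * fst (snd p) * snd (snd p)"

lemma PF_hh: "PF (hh e1)"
proof -
  have "PF (\<lambda>p. fst p ^ (2*e1) - 4 * fst (snd p) * snd (snd p))" by (intro PF_intros)
  then show ?thesis by (simp add: hh_def[abs_def])
qed

lemma hh_S': "p \<in> surfS' e1 \<Longrightarrow> hh e1 p = 0"
  by (cases p) (simp add: hh_def memS')

lemma PD:
  fixes f :: "'a::comm_ring_1 pt3 \<Rightarrow> 'a"
  assumes "PH w m f"
  shows "\<exists>n Q R. PF Q \<and> PF R \<and> (\<forall>p. R p = R (fst p, fst (snd p), 0)) \<and>
           (\<forall>p. (-4 * fst (snd p))^n * f p = hh e1 p * Q p + R p)"
  using assms
proof (induction rule: PH.induct)
  case (zero m) then show ?case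
    by (intro exI[of _ 0] exI[of _ "\<lambda>_. 0"] exI[of _ "\<lambda>_. 0"]) (auto intro: PF_intros PH.zero)
next
  case (const k) then show ?case
    by (intro exI[of _ 0] exI[of _ "\<lambda>_. 0"] exI[of _ "\<lambda>_. k"]) (auto intro: PF_intros)
next
  case x1 then show ?case
    by (intro exI[of _ 0] exI[of _ "\<lambda>_. 0"] exI[of _ "\<lambda>p. fst p"]) (auto intro: PF_intros)
next
  case x2 then show ?case
    by (intro exI[of _ 0] exI[of _ "\<lambda>_. 0"] exI[of _ "\<lambda>p. fst (snd p)"]) (auto intro: PF_intros)
next
  case x3 then show ?case
    by (intro exI[of _ 1] exI[of _ "\<lambda>_. 1"] exI[of _ "\<lambda>p. - (fst p ^ (2*e1))"])
       (auto intro!: PF_intros simp: hh_def)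
next
  case (add m f g)
  then obtain n1 Q1 R1 n2 Q2 R2 where A: "PF Q1" "PF R1" "\<forall>p. R1 p = R1 (fst p, fst (snd p), 0)"
      "\<forall>p. (-4 * fst (snd p))^n1 * f p = hh e1 p * Q1 p + R1 p"
      "PF Q2" "PF R2" "\<forall>p. R2 p = R2 (fst p, fst (snd p), 0)"
      "\<forall>p. (-4 * fst (snd p))^n2 * g p = hh e1 p * Q2 p + R2 p" by blast
  define QQ where "QQ = (\<lambda>p. Q1 p * (-4 * fst (snd p))^n2 + Q2 p * (-4 * fst (snd p))^n1)"
  define RR where "RR = (\<lambda>p. R1 p * (-4 * fst (snd p))^n2 + R2 p * (-4 * fst (snd p))^n1)"
  have "PF QQ" unfolding QQ_def using A by (intro PF_intros)
  moreover have "PF RR" unfolding RR_def using A by (intro PF_intros)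
  moreover have "\<forall>p. RR p = RR (fst p, fst (snd p), 0)"
  proof
    fix p :: "'a pt3"
    have "R1 p = R1 (fst p, fst (snd p), 0)" "R2 p = R2 (fst p, fst (snd p), 0)" using A(3,7) by blast+
    then show "RR p = RR (fst p, fst (snd p), 0)" unfolding RR_def by simp
  qed
  moreover have "\<forall>p. (-4 * fst (snd p))^(n1+n2) * (f p + g p) = hh e1 p * QQ p + RR p"
  proof
    fix p :: "'a pt3"
    have e1: "(-4 * fst (snd p))^n1 * f p = hh e1 p * Q1 p + R1 p"
      and e2: "(-4 * fst (snd p))^n2 * g p = hh e1 p * Q2 p + R2 p" using A(4,8) by blast+
    have "(-4 * fst (snd p))^(n1+n2) * (f p + g p)
        = (-4 * fst (snd p))^n2 * ((-4 * fst (snd p))^n1 * f p) + (-4 * fst (snd p))^n1 * ((-4 * fst (snd p))^n2 * g p)"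
      by (simp add: power_add algebra_simps)
    also have "\<dots> = hh e1 p * QQ p + RR p"
      unfolding e1 e2 QQ_def RR_def by (simp add: algebra_simps)
    finally show "(-4 * fst (snd p))^(n1+n2) * (f p + g p) = hh e1 p * QQ p + RR p" .
  qed
  ultimately show ?case by blast
next
  case (mul m f n g)
  then obtain n1 Q1 R1 n2 Q2 R2 where A: "PF Q1" "PF R1" "\<forall>p. R1 p = R1 (fst p, fst (snd p), 0)"
      "\<forall>p. (-4 * fst (snd p))^n1 * f p = hh e1 p * Q1 p + R1 p"
      "PF Q2" "PF R2" "\<forall>p. R2 p = R2 (fst p, fst (snd p), 0)"
      "\<forall>p. (-4 * fst (snd p))^n2 * g p = hh e1 p * Q2 p + R2 p" by blast
  define QQ where "QQ = (\<lambda>p. Q1 p * (hh e1 p * Q2 p + R2 p) + R1 p * Q2 p)"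
  define RR where "RR = (\<lambda>p. R1 p * R2 p)"
  have "PF QQ" unfolding QQ_def using A PF_hh by (intro PF_intros)
  moreover have "PF RR" unfolding RR_def using A by (intro PF_intros)
  moreover have "\<forall>p. RR p = RR (fst p, fst (snd p), 0)" unfolding RR_def using A by metis
  moreover have "\<forall>p. (-4 * fst (snd p))^(n1+n2) * (f p * g p) = hh e1 p * QQ p + RR p"
  proof
    fix p :: "'a pt3"
    have e1: "(-4 * fst (snd p))^n1 * f p = hh e1 p * Q1 p + R1 p"
      and e2: "(-4 * fst (snd p))^n2 * g p = hh e1 p * Q2 p + R2 p" using A(4,8) by blast+
    have "(-4 * fst (snd p))^(n1+n2) * (f p * g p)
        = ((-4 * fst (snd p))^n1 * f p) * ((-4 * fst (snd p))^n2 * g p)"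
      by (simp add: power_add algebra_simps)
    also have "\<dots> = hh e1 p * QQ p + RR p"
      unfolding e1 e2 QQ_def RR_def by (simp add: algebra_simps)
    finally show "(-4 * fst (snd p))^(n1+n2) * (f p * g p) = hh e1 p * QQ p + RR p" .
  qed
  ultimately show ?case by blast
qed

lemma KL:
  fixes f :: "'a::field_char_0 pt3 \<Rightarrow> 'a"
  assumes e: "e1 \<ge> 1" and f: "PF f" and f0: "\<forall>p\<in>(surfS' e1 :: 'a pt3 set). f p = 0"
    and V: "PF u" "PF v" "PF w"
    and T: "\<forall>p\<in>(surfS' e1 :: 'a pt3 set). DD (hh e1) p (u p, v p, w p) = 0"
  shows "\<forall>p\<in>(surfS' e1 :: 'a pt3 set). DD f p (u p, v p, w p) = 0"
proof -
  obtain n Q R where QR: "PF Q" "PF R" "\<forall>p. R p = R (fst p, fst (snd p), 0)"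
      "\<forall>p. (-4 * fst (snd p))^n * f p = hh e1 p * Q p + R p"
    using PD[OF f, of e1] by blast
  have R0: "R (a, b, 0) = 0" for a b
  proof (cases "b = 0")
    case False
    let ?p = "(a, b, a^(2*e1) / (4*b))"
    have p: "?p \<in> surfS' e1" using False by (simp add: memS')
    then have "R ?p = 0" using QR(4) f0 hh_S'[OF p] by (metis add_0 mult_zero_left mult_zero_right)
    then show ?thesis using QR(3) by (metis fst_conv snd_conv)
  next
    case True
    have "R (poly [:a:] 0, poly [:0,1:] 0, poly 0 0) = 0"
    proof (rule CL[OF QR(2)], intro allI impI)
      fix t :: 'a assume t: "t \<noteq> 0"
      let ?p = "(a, t, a^(2*e1) / (4*t))"
      have p: "?p \<in> surfS' e1" using t by (simp add: memS')
      then have "R ?p = 0" using QR(4) f0 hh_S'[OF p] by (metis add_0 mult_zero_left mult_zero_right)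
      then have "R (a, t, 0) = 0" using QR(3) by (metis fst_conv snd_conv)
      then show "R (poly [:a:] t, poly [:0,1:] t, poly 0 t) = 0" by simp
    qed
    then show ?thesis using True by simp
  qed
  have eqf: "(\<lambda>x. (-4 * fst (snd x))^n * f x) = (\<lambda>x. hh e1 x * Q x)"
  proof
    fix x :: "'a pt3"
    show "(-4 * fst (snd x))^n * f x = hh e1 x * Q x"
      using QR(3,4) R0 by (metis add_0_right)
  qed
  have Pb: "PF (\<lambda>x. (-4 * fst (snd x))^n :: 'a)" by (intro PF_intros)
  show ?thesis
  proof (rule DenB[OF e PF_DD[OF f V]], intro ballI impI)
    fix p :: "'a pt3" assume p: "p \<in> surfS' e1" and b: "fst (snd p) \<noteq> 0"
    have "DD (\<lambda>x. (-4 * fst (snd x))^n * f x) p (u p, v p, w p) = (-4 * fst (snd p))^n * DD f p (u p, v p, w p)"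
      using DD_mul[OF Pb f] f0 p by simp
    moreover have "DD (\<lambda>x. hh e1 x * Q x) p (u p, v p, w p) = 0"
      using DD_mul[OF PF_hh QR(1)] hh_S'[OF p] T p by simp
    ultimately have "(-4 * fst (snd p))^n * DD f p (u p, v p, w p) = 0" using eqf by simp
    then show "DD f p (u p, v p, w p) = 0" using b by simp
  qed
qed



lemma mapF_eq: "mapF p = (fst p ^ 2, fst (snd p) + snd (snd p), fst p * (fst (snd p) - snd (snd p)))"
  by (cases p) (simp add: mapF_def)

lemma sigma_eq: "sigma p = (- fst p, snd (snd p), fst (snd p))"
  by (cases p) (simp add: sigma_def)

lemma sigma_sigma: "sigma (sigma p) = p"
  by (simp add: sigma_eq)

lemma sigma_S': "p \<in> surfS' e1 \<Longrightarrow> sigma p \<in> surfS' e1"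
  by (cases p) (simp add: sigma_eq memS' mult_ac)

lemma mapF_sigma: "mapF (sigma p) = mapF p"
  by (simp add: mapF_eq sigma_eq algebra_simps)

lemma mapF_S:
  fixes p :: "'a::comm_ring_1 pt3"
  assumes "p \<in> surfS' e1" shows "mapF p \<in> surfS e1"
proof -
  obtain a b c where p: "p = (a,b,c)" by (cases p)
  have h: "a^(2*e1) = 4*b*c" using assms p by (simp add: memS')
  have pe: "(a^2)^e1 = a^(2*e1)" by (simp add: power_mult)
  have "(a*(b-c))^2 + (a^(2*e1) - (b+c)^2) * a^2 = a^2 * (a^(2*e1) - 4*b*c)"
    by (simp add: power2_eq_square algebra_simps)
  then have "(a*(b-c))^2 + ((a^2)^e1 - (b+c)^2) * a^2 = a^2 * (a^(2*e1) - 4*b*c)" by (simp only: pe)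
  also have "\<dots> = 0" using h by simp
  finally show ?thesis using p by (simp add: mapF_eq memS)
qed

lemma PH_pullF:
  fixes f :: "'a::comm_ring_1 pt3 \<Rightarrow> 'a"
  assumes "PH (2*wa, e1*wa, e1*wa+wa) m f"
  shows "PH (wa, e1*wa, e1*wa) m (\<lambda>p. f (mapF p))"
proof -
  let ?w = "(wa, e1*wa, e1*wa)"
  have 1: "PH ?w (int (2*wa)) (\<lambda>p. fst p ^ 2)" by (rule PH_pow[OF PH.x1]) simp
  have 2: "PH ?w (int (e1*wa)) (\<lambda>p. fst (snd p) + snd (snd p))"
    by (rule PH.add; rule PH_x2 PH_x3; simp)
  have x1: "PH ?w (int wa) (\<lambda>p. fst p)" by (rule PH_x1) simp
  have d: "PH ?w (int (e1*wa)) (\<lambda>p. fst (snd p) - snd (snd p))" by (rule PH_sub; rule PH_x2 PH_x3; simp)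
  have "PH ?w (int wa + int (e1*wa)) (\<lambda>p. fst p * (fst (snd p) - snd (snd p)))"
    by (rule PH.mul[OF x1 d])
  then have 3: "PH ?w (int (e1*wa+wa)) (\<lambda>p. fst p * (fst (snd p) - snd (snd p)))" by (simp add: add.commute)
  let ?ws = "(2*wa, e1*wa, e1*wa+wa)"
  have a1: "PH ?w (int (fst ?ws)) (\<lambda>p. fst p ^ 2)" using 1 by simp
  have a2: "PH ?w (int (fst (snd ?ws))) (\<lambda>p. fst (snd p) + snd (snd p))" using 2 by simp
  have a3: "PH ?w (int (snd (snd ?ws))) (\<lambda>p. fst p * (fst (snd p) - snd (snd p)))" using 3 by simp
  show ?thesis using PH_comp[OF assms a1 a2 a3] by (simp add: mapF_eq)
qed

lemma PF_pullF: "PF f \<Longrightarrow> PF (\<lambda>p. f (mapF p))"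
  using PH_pullF[of 0 e1 0 f] by simp

lemma PH_pullS:
  fixes f :: "'a::comm_ring_1 pt3 \<Rightarrow> 'a"
  assumes "PH (wa, wb, wb) m f"
  shows "PH (wa, wb, wb) m (\<lambda>p. f (sigma p))"
proof -
  let ?w = "(wa, wb, wb)"
  have 1: "PH ?w (int wa) (\<lambda>p. - fst p)" by (rule PH_neg[OF PH_x1]) simp
  have 2: "PH ?w (int wb) (\<lambda>p. snd (snd p))" by (rule PH_x3) simp
  have 3: "PH ?w (int wb) (\<lambda>p. fst (snd p))" by (rule PH_x2) simp
  have a1: "PH ?w (int (fst ?w)) (\<lambda>p. - fst p)" using 1 by simp
  have a2: "PH ?w (int (fst (snd ?w))) (\<lambda>p. snd (snd p))" using 2 by simp
  have a3: "PH ?w (int (snd (snd ?w))) (\<lambda>p. fst (snd p))" using 3 by simp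
  show ?thesis using PH_comp[OF assms a1 a2 a3] by (simp add: sigma_eq)
qed

lemma PF_pullS: "PF f \<Longrightarrow> PF (\<lambda>p. f (sigma p))"
  using PH_pullS[of 0 0 0 f] by simp

lemma DECX:
  fixes f :: "'a::comm_ring_1 pt3 \<Rightarrow> 'a"
  assumes "PH w m f"
  shows "\<exists>r g1 g3. PH w m r \<and> (\<forall>p. r p = r (0, fst (snd p), 0)) \<and>
     PH w (m - int (fst w)) g1 \<and> PH w (m - int (snd (snd w))) g3 \<and>
     (\<forall>p. f p = r p + fst p * g1 p + snd (snd p) * g3 p)"
  using assms
proof (induction rule: PH.induct)
  case (zero m) show ?case
    by (intro exI[of _ "\<lambda>_. 0"] conjI PH.zero) auto
next
  case (const k) show ?case
    by (intro exI[of _ "\<lambda>_. k"] exI[of _ "\<lambda>_. 0"] conjI PH.zero PH.const) auto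
next
  case x1 show ?case
    by (intro exI[of _ "\<lambda>_. 0"] exI[of _ "\<lambda>_. 1"] conjI PH.zero PH_const') auto
next
  case x2 show ?case
    by (intro exI[of _ "\<lambda>p. fst (snd p)"] exI[of _ "\<lambda>_. 0"] conjI PH.zero PH.x2) auto
next
  case x3 show ?case
    by (intro exI[of _ "\<lambda>_. 0"] exI[of _ "\<lambda>_. 0"] exI[of _ "\<lambda>_. 1"] conjI PH.zero PH_const') auto
next
  case (add m f g)
  then obtain r g1 g3 r' g1' g3' where A:
    "PH w m r" "\<forall>p. r p = r (0, fst (snd p), 0)" "PH w (m - int (fst w)) g1" "PH w (m - int (snd (snd w))) g3"
      "\<forall>p. f p = r p + fst p * g1 p + snd (snd p) * g3 p"
    "PH w m r'" "\<forall>p. r' p = r' (0, fst (snd p), 0)" "PH w (m - int (fst w)) g1'" "PH w (m - int (snd (snd w))) g3'"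
      "\<forall>p. g p = r' p + fst p * g1' p + snd (snd p) * g3' p" by metis
  define R where "R = (\<lambda>p. r p + r' p)"
  define G1 where "G1 = (\<lambda>p. g1 p + g1' p)"
  define G3 where "G3 = (\<lambda>p. g3 p + g3' p)"
  have "PH w m R" unfolding R_def using A by (intro PH.add)
  moreover have "PH w (m - int (fst w)) G1" unfolding G1_def using A by (intro PH.add)
  moreover have "PH w (m - int (snd (snd w))) G3" unfolding G3_def using A by (intro PH.add)
  moreover have "\<forall>p. R p = R (0, fst (snd p), 0)"
  proof
    fix p :: "'a pt3"
    have "r p = r (0, fst (snd p), 0)" "r' p = r' (0, fst (snd p), 0)" using A(2,7) by blast+
    then show "R p = R (0, fst (snd p), 0)" unfolding R_def by simp
  qed
  moreover have "\<forall>p. f p + g p = R p + fst p * G1 p + snd (snd p) * G3 p"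
  proof
    fix p :: "'a pt3"
    have "f p = r p + fst p * g1 p + snd (snd p) * g3 p" "g p = r' p + fst p * g1' p + snd (snd p) * g3' p"
      using A(5,10) by blast+
    then show "f p + g p = R p + fst p * G1 p + snd (snd p) * G3 p"
      unfolding R_def G1_def G3_def by (simp add: algebra_simps)
  qed
  ultimately show ?case by blast
next
  case (mul m f n g)
  then obtain r g1 g3 r' g1' g3' where A:
    "PH w m r" "\<forall>p. r p = r (0, fst (snd p), 0)" "PH w (m - int (fst w)) g1" "PH w (m - int (snd (snd w))) g3"
      "\<forall>p. f p = r p + fst p * g1 p + snd (snd p) * g3 p"
    "PH w n r'" "\<forall>p. r' p = r' (0, fst (snd p), 0)" "PH w (n - int (fst w)) g1'" "PH w (n - int (snd (snd w))) g3'"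
      "\<forall>p. g p = r' p + fst p * g1' p + snd (snd p) * g3' p" by metis
  define R where "R = (\<lambda>p. r p * r' p)"
  define G1 where "G1 = (\<lambda>p. g1 p * g p + r p * g1' p)"
  define G3 where "G3 = (\<lambda>p. g3 p * g p + r p * g3' p)"
  have "PH w (m + n) R" unfolding R_def using PH.mul[OF A(1,6)] .
  moreover have "PH w (m + n - int (fst w)) G1" unfolding G1_def
    by (rule PH.add; rule PH_mul'[OF A(3) mul.hyps(2)] PH_mul'[OF A(1) A(8)]; simp)
  moreover have "PH w (m + n - int (snd (snd w))) G3" unfolding G3_def
    by (rule PH.add; rule PH_mul'[OF A(4) mul.hyps(2)] PH_mul'[OF A(1) A(9)]; simp)
  moreover have "\<forall>p. R p = R (0, fst (snd p), 0)"
  proof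
    fix p :: "'a pt3"
    have "r p = r (0, fst (snd p), 0)" "r' p = r' (0, fst (snd p), 0)" using A(2,7) by blast+
    then show "R p = R (0, fst (snd p), 0)" unfolding R_def by simp
  qed
  moreover have "\<forall>p. f p * g p = R p + fst p * G1 p + snd (snd p) * G3 p"
  proof
    fix p :: "'a pt3"
    have "f p = r p + fst p * g1 p + snd (snd p) * g3 p" "g p = r' p + fst p * g1' p + snd (snd p) * g3' p"
      using A(5,10) by blast+
    then show "f p * g p = R p + fst p * G1 p + snd (snd p) * G3 p"
      unfolding R_def G1_def G3_def by (simp add: algebra_simps)
  qed
  ultimately show ?case by blast
qed



lemma DECS:
  fixes f :: "'a::field_char_0 pt3 \<Rightarrow> 'a"
  assumes e: "e1 \<ge> 1" and f: "PH (wa, e1*wa, e1*wa) m f"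
  shows "\<exists>k s t g. (m \<noteq> 0 \<longrightarrow> k = 0) \<and>
     PH (wa, e1*wa, e1*wa) (m - int (e1*wa)) s \<and> (\<forall>p. s p = s (0, fst (snd p), 0)) \<and>
     PH (wa, e1*wa, e1*wa) (m - int (e1*wa)) t \<and> (\<forall>p. t p = t (0, 0, snd (snd p))) \<and>
     PH (wa, e1*wa, e1*wa) (m - int wa) g \<and>
     (\<forall>p\<in>(surfS' e1 :: 'a pt3 set). f p = k + fst (snd p) * s p + snd (snd p) * t p + fst p * g p)"
  using f
proof (induction rule: PH.induct)
  case (zero m) show ?case
    by (intro exI[of _ 0] exI[of _ "\<lambda>_. 0"] conjI PH.zero) auto
next
  case (const k) show ?case
    by (intro exI[of _ k] exI[of _ "\<lambda>_. 0"] conjI PH.zero) auto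
next
  case x1 show ?case
    by (intro exI[of _ 0] exI[of _ "\<lambda>_. 0"] exI[of _ "\<lambda>_. 0"] exI[of _ "\<lambda>_. 1"] conjI PH.zero PH_const') auto
next
  case x2 show ?case
    by (intro exI[of _ 0] exI[of _ "\<lambda>_. 1"] exI[of _ "\<lambda>_. 0"] exI[of _ "\<lambda>_. 0"] conjI PH.zero PH_const') auto
next
  case x3 show ?case
    by (intro exI[of _ 0] exI[of _ "\<lambda>_. 0"] exI[of _ "\<lambda>_. 1"] exI[of _ "\<lambda>_. 0"] conjI PH.zero PH_const') auto
next
  case (add m f g)
  let ?w = "(wa, e1*wa, e1*wa)"
  obtain k1 s1 t1 g1 where A: "m \<noteq> 0 \<longrightarrow> k1 = 0" "PH ?w (m - int (e1*wa)) s1" "\<forall>p. s1 p = s1 (0, fst (snd p), 0)"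
     "PH ?w (m - int (e1*wa)) t1" "\<forall>p. t1 p = t1 (0, 0, snd (snd p))" "PH ?w (m - int wa) g1"
     "\<forall>p\<in>(surfS' e1 :: 'a pt3 set). f p = k1 + fst (snd p) * s1 p + snd (snd p) * t1 p + fst p * g1 p"
    using add.IH(1) by blast
  obtain k2 s2 t2 g2 where B: "m \<noteq> 0 \<longrightarrow> k2 = 0" "PH ?w (m - int (e1*wa)) s2" "\<forall>p. s2 p = s2 (0, fst (snd p), 0)"
     "PH ?w (m - int (e1*wa)) t2" "\<forall>p. t2 p = t2 (0, 0, snd (snd p))" "PH ?w (m - int wa) g2"
     "\<forall>p\<in>(surfS' e1 :: 'a pt3 set). g p = k2 + fst (snd p) * s2 p + snd (snd p) * t2 p + fst p * g2 p"
    using add.IH(2) by blast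
  define S where "S = (\<lambda>p. s1 p + s2 p)"
  define T where "T = (\<lambda>p. t1 p + t2 p)"
  define G where "G = (\<lambda>p. g1 p + g2 p)"
  have "m \<noteq> 0 \<longrightarrow> k1 + k2 = 0" using A(1) B(1) by simp
  moreover have "PH ?w (m - int (e1*wa)) S" unfolding S_def using A B by (intro PH.add)
  moreover have "PH ?w (m - int (e1*wa)) T" unfolding T_def using A B by (intro PH.add)
  moreover have "PH ?w (m - int wa) G" unfolding G_def using A B by (intro PH.add)
  moreover have "\<forall>p. S p = S (0, fst (snd p), 0)"
  proof
    fix p :: "'a pt3"
    have "s1 p = s1 (0, fst (snd p), 0)" "s2 p = s2 (0, fst (snd p), 0)" using A(3) B(3) by blast+
    then show "S p = S (0, fst (snd p), 0)" unfolding S_def by simp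
  qed
  moreover have "\<forall>p. T p = T (0, 0, snd (snd p))"
  proof
    fix p :: "'a pt3"
    have "t1 p = t1 (0, 0, snd (snd p))" "t2 p = t2 (0, 0, snd (snd p))" using A(5) B(5) by blast+
    then show "T p = T (0, 0, snd (snd p))" unfolding T_def by simp
  qed
  moreover have "\<forall>p\<in>(surfS' e1 :: 'a pt3 set). f p + g p = (k1 + k2) + fst (snd p) * S p + snd (snd p) * T p + fst p * G p"
  proof
    fix p :: "'a pt3" assume p: "p \<in> surfS' e1"
    have "f p = k1 + fst (snd p) * s1 p + snd (snd p) * t1 p + fst p * g1 p"
         "g p = k2 + fst (snd p) * s2 p + snd (snd p) * t2 p + fst p * g2 p" using A(7) B(7) p by blast+
    then show "f p + g p = (k1 + k2) + fst (snd p) * S p + snd (snd p) * T p + fst p * G p"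
      unfolding S_def T_def G_def by (simp add: algebra_simps)
  qed
  ultimately show ?case by blast
next
  case (mul m f n g)
  let ?w = "(wa, e1*wa, e1*wa)"
  obtain k1 s1 t1 g1 where A: "m \<noteq> 0 \<longrightarrow> k1 = 0" "PH ?w (m - int (e1*wa)) s1" "\<forall>p. s1 p = s1 (0, fst (snd p), 0)"
     "PH ?w (m - int (e1*wa)) t1" "\<forall>p. t1 p = t1 (0, 0, snd (snd p))" "PH ?w (m - int wa) g1"
     "\<forall>p\<in>(surfS' e1 :: 'a pt3 set). f p = k1 + fst (snd p) * s1 p + snd (snd p) * t1 p + fst p * g1 p"
    using mul.IH(1) by blast
  obtain k2 s2 t2 g2 where B: "n \<noteq> 0 \<longrightarrow> k2 = 0" "PH ?w (n - int (e1*wa)) s2" "\<forall>p. s2 p = s2 (0, fst (snd p), 0)"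
     "PH ?w (n - int (e1*wa)) t2" "\<forall>p. t2 p = t2 (0, 0, snd (snd p))" "PH ?w (n - int wa) g2"
     "\<forall>p\<in>(surfS' e1 :: 'a pt3 set). g p = k2 + fst (snd p) * s2 p + snd (snd p) * t2 p + fst p * g2 p"
    using mul.IH(2) by blast
  define S where "S = (\<lambda>p. k1 * s2 p + k2 * s1 p + fst (snd p) * s1 p * s2 p)"
  define T where "T = (\<lambda>p. k1 * t2 p + k2 * t1 p + snd (snd p) * t1 p * t2 p)"
  define L where "L = (\<lambda>p. k1 + fst (snd p) * s1 p + snd (snd p) * t1 p)"
  define G where "G = (\<lambda>p. g1 p * g p + L p * g2 p + 1/4 * fst p ^ (2*e1 - 1) * (s1 p * t2 p + t1 p * s2 p))"
  have k1: "PH ?w m (\<lambda>_. k1)" using A(1) by (intro PH_const') auto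
  have k2: "PH ?w n (\<lambda>_. k2)" using B(1) by (intro PH_const') auto
  have xb: "PH ?w (int (e1*wa)) (\<lambda>p. fst (snd p))" by (rule PH_x2) simp
  have xc: "PH ?w (int (e1*wa)) (\<lambda>p. snd (snd p))" by (rule PH_x3) simp
  have xa: "PH ?w (int wa) (\<lambda>p. fst p)" by (rule PH_x1) simp
  have "m + n \<noteq> 0 \<longrightarrow> k1 * k2 = 0" using A(1) B(1) by auto
  moreover have "PH ?w (m + n - int (e1*wa)) S" unfolding S_def
  proof (intro PH.add)
    show "PH ?w (m + n - int (e1*wa)) (\<lambda>p. k1 * s2 p)" by (rule PH_mul'[OF k1 B(2)]) simp
    show "PH ?w (m + n - int (e1*wa)) (\<lambda>p. k2 * s1 p)" by (rule PH_mul'[OF k2 A(2)]) simp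
    have "PH ?w (int (e1*wa) + (m - int (e1*wa))) (\<lambda>p. fst (snd p) * s1 p)" by (rule PH.mul[OF xb A(2)])
    then show "PH ?w (m + n - int (e1*wa)) (\<lambda>p. fst (snd p) * s1 p * s2 p)" by (rule PH_mul'[OF _ B(2)]) simp
  qed
  moreover have "PH ?w (m + n - int (e1*wa)) T" unfolding T_def
  proof (intro PH.add)
    show "PH ?w (m + n - int (e1*wa)) (\<lambda>p. k1 * t2 p)" by (rule PH_mul'[OF k1 B(4)]) simp
    show "PH ?w (m + n - int (e1*wa)) (\<lambda>p. k2 * t1 p)" by (rule PH_mul'[OF k2 A(4)]) simp
    have "PH ?w (int (e1*wa) + (m - int (e1*wa))) (\<lambda>p. snd (snd p) * t1 p)" by (rule PH.mul[OF xc A(4)])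
    then show "PH ?w (m + n - int (e1*wa)) (\<lambda>p. snd (snd p) * t1 p * t2 p)" by (rule PH_mul'[OF _ B(4)]) simp
  qed
  moreover have "PH ?w (m + n - int wa) G" unfolding G_def
  proof (intro PH.add)
    show "PH ?w (m + n - int wa) (\<lambda>p. g1 p * g p)" by (rule PH_mul'[OF A(6) mul.hyps(2)]) simp
    have L: "PH ?w m L" unfolding L_def
    proof (intro PH.add k1)
      show "PH ?w m (\<lambda>p. fst (snd p) * s1 p)" by (rule PH_mul'[OF xb A(2)]) simp
      show "PH ?w m (\<lambda>p. snd (snd p) * t1 p)" by (rule PH_mul'[OF xc A(4)]) simp
    qed
    show "PH ?w (m + n - int wa) (\<lambda>p. L p * g2 p)" by (rule PH_mul'[OF L B(6)]) simp
    have pw: "PH ?w (int (2*e1 - 1) * int wa) (\<lambda>p. fst p ^ (2*e1 - 1))" by (rule PH_pow[OF xa]) simp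
    have c4: "PH ?w 0 (\<lambda>p. 1/4 :: 'a)" by (rule PH.const)
    have st: "PH ?w (m + n - 2 * int (e1*wa)) (\<lambda>p. s1 p * t2 p + t1 p * s2 p)"
      by (intro PH.add; rule PH_mul'[OF A(2) B(4)] PH_mul'[OF A(4) B(2)]; simp)
    have dg: "0 + int (2*e1 - 1) * int wa + (m + n - 2 * int (e1*wa)) = m + n - int wa"
      using e by (simp add: of_nat_diff algebra_simps)
    show "PH ?w (m + n - int wa) (\<lambda>p. 1/4 * fst p ^ (2*e1 - 1) * (s1 p * t2 p + t1 p * s2 p))"
      by (rule PH_mul'[OF PH.mul[OF c4 pw] st]) (use dg in simp)
  qed
  moreover have "\<forall>p. S p = S (0, fst (snd p), 0)"
  proof
    fix p :: "'a pt3"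
    have "s1 p = s1 (0, fst (snd p), 0)" "s2 p = s2 (0, fst (snd p), 0)" using A(3) B(3) by blast+
    then show "S p = S (0, fst (snd p), 0)" unfolding S_def by simp
  qed
  moreover have "\<forall>p. T p = T (0, 0, snd (snd p))"
  proof
    fix p :: "'a pt3"
    have "t1 p = t1 (0, 0, snd (snd p))" "t2 p = t2 (0, 0, snd (snd p))" using A(5) B(5) by blast+
    then show "T p = T (0, 0, snd (snd p))" unfolding T_def by simp
  qed
  moreover have "\<forall>p\<in>(surfS' e1 :: 'a pt3 set). f p * g p = k1 * k2 + fst (snd p) * S p + snd (snd p) * T p + fst p * G p"
  proof
    fix p :: "'a pt3" assume p: "p \<in> surfS' e1"
    obtain a b c where abc: "p = (a,b,c)" by (cases p)
    have h: "a^(2*e1) = 4*b*c" using p abc by (simp add: memS')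
    have hh: "a * (1/4 * a^(2*e1-1) * X) = b * c * X" for X :: 'a
    proof -
      have "a * a^(2*e1-1) = a^(2*e1)" using e by (simp add: power_eq_if[of a "2*e1"])
      then show ?thesis using h by (simp add: algebra_simps)
    qed
    have fp: "f p = k1 + fst (snd p) * s1 p + snd (snd p) * t1 p + fst p * g1 p"
     and gp: "g p = k2 + fst (snd p) * s2 p + snd (snd p) * t2 p + fst p * g2 p" using A(7) B(7) p by blast+
    have "f p * g p = k1 * k2 + b * S p + c * T p + b * c * (s1 p * t2 p + t1 p * s2 p)
       + a * (g1 p * g p + L p * g2 p)"
      unfolding S_def T_def L_def using fp gp abc by (simp add: algebra_simps)
    also have "\<dots> = k1 * k2 + b * S p + c * T p + a * G p"
      unfolding G_def using hh[of "s1 p * t2 p + t1 p * s2 p"] abc by (simp add: algebra_simps)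
    finally show "f p * g p = k1 * k2 + fst (snd p) * S p + snd (snd p) * T p + fst p * G p"
      using abc by simp
  qed
  ultimately show ?case by blast
qed



lemma two_cancel: "2 * a = 2 * b \<Longrightarrow> a = (b::'a::field_char_0)" by simp

lemma two_half: "2 * (x / 2) = (x::'a::field_char_0)" by simp

lemma construct:
  fixes A0 B0 C0 :: "'a::field_char_0 pt3 \<Rightarrow> 'a" and r :: int
  assumes e: "e1 \<ge> 1"
    and A0: "PH (2*wa, e1*wa, e1*wa+wa) (int (2*wa) + r) A0"
    and B0: "PH (2*wa, e1*wa, e1*wa+wa) (int (e1*wa) + r) B0"
    and C0: "PH (2*wa, e1*wa, e1*wa+wa) (int (e1*wa+wa) + r) C0"
    and cond: "\<forall>x\<in>(surfS e1 :: 'a pt3 set). A0 x * (of_nat (e1+1) * fst x ^ e1 - fst (snd x) ^ 2)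
        - 2 * fst x * fst (snd x) * B0 x + 2 * snd (snd x) * C0 x = 0"
  shows "\<exists>u v w. PH (wa, e1*wa, e1*wa) (int wa + r) u \<and> PH (wa, e1*wa, e1*wa) (int (e1*wa) + r) v
     \<and> PH (wa, e1*wa, e1*wa) (int (e1*wa) + r) w
     \<and> (\<forall>p\<in>(surfS' e1 :: 'a pt3 set). 2 * fst p * u p = A0 (mapF p))
     \<and> (\<forall>p\<in>(surfS' e1 :: 'a pt3 set). v p + w p = B0 (mapF p))
     \<and> (\<forall>p\<in>(surfS' e1 :: 'a pt3 set). u p * (fst (snd p) - snd (snd p)) + fst p * (v p - w p) = C0 (mapF p))
     \<and> (\<forall>p\<in>(surfS' e1 :: 'a pt3 set). of_nat (2*e1) * fst p ^ (2*e1 - 1) * u p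
            - 4 * snd (snd p) * v p - 4 * fst (snd p) * w p = 0)
     \<and> (\<forall>p. u (sigma p) = - u p \<and> v (sigma p) = w p \<and> w (sigma p) = v p)"
proof -
  let ?ws = "(2*wa, e1*wa, e1*wa+wa)" and ?wt = "(wa, e1*wa, e1*wa)"
  have z: "(0::'a) ^ e1 = 0" "(0::'a) ^ (2*e1) = 0" using e by simp_all
  have A0ax: "A0 (0, t, 0) = 0" for t
  proof -
    have "A0 (poly 0 0, poly [:0,1:] 0, poly 0 0) = 0"
    proof (rule CL[OF A0], intro allI impI)
      fix t :: 'a assume t: "t \<noteq> 0"
      have "(0, t, 0) \<in> (surfS e1 :: 'a pt3 set)" by (simp add: memS)
      from bspec[OF cond this] have "A0 (0,t,0) * (- (t^2)) = 0" using z by simp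
      then show "A0 (poly 0 t, poly [:0,1:] t, poly 0 t) = 0" using t by simp
    qed
    then have "A0 (0,0,0) = 0" by simp
    moreover have "t \<noteq> 0 \<Longrightarrow> A0 (0,t,0) = 0"
    proof -
      assume t: "t \<noteq> 0"
      have "(0, t, 0) \<in> (surfS e1 :: 'a pt3 set)" by (simp add: memS)
      from bspec[OF cond this] have "A0 (0,t,0) * (- (t^2)) = 0" using z by simp
      then show ?thesis using t by simp
    qed
    ultimately show ?thesis by (cases "t = 0") auto
  qed
  obtain r1 g1 g3 where D1: "PH ?ws (int (2*wa) + r) r1" "\<forall>p. r1 p = r1 (0, fst (snd p), 0)"
     "PH ?ws (int (2*wa) + r - int (fst ?ws)) g1" "PH ?ws (int (2*wa) + r - int (snd (snd ?ws))) g3"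
     "\<forall>p. A0 p = r1 p + fst p * g1 p + snd (snd p) * g3 p"
    using DECX[OF A0] by blast
  have r10: "r1 p = 0" for p
  proof -
    have "r1 p = r1 (0, fst (snd p), 0)" using D1(2) by blast
    also have "\<dots> = A0 (0, fst (snd p), 0)" using D1(5)[rule_format, of "(0, fst (snd p), 0)"] by simp
    finally show ?thesis using A0ax by simp
  qed
  have A0eq: "A0 x = fst x * g1 x + snd (snd x) * g3 x" for x using D1(5)[rule_format, of x] r10[of x] by simp
  have g1: "PH ?ws r g1" using D1(3) by simp
  have g3: "PH ?ws (int wa + r - int (e1*wa)) g3" using D1(4) by (simp add: algebra_simps)
  define u where "u = (\<lambda>p. (fst p * g1 (mapF p) + (fst (snd p) - snd (snd p)) * g3 (mapF p)) / 2)"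
  have xa: "PH ?wt (int wa) (\<lambda>p. fst p)" by (rule PH_x1) simp
  have xbc: "PH ?wt (int (e1*wa)) (\<lambda>p. fst (snd p) - snd (snd p))" by (rule PH_sub; rule PH_x2 PH_x3; simp)
  have uPH: "PH ?wt (int wa + r) u"
  proof -
    have "PH ?wt (int wa + r) (\<lambda>p. (fst p * g1 (mapF p) + (fst (snd p) - snd (snd p)) * g3 (mapF p)) * (1/2))"
    proof (rule PH_mul'[OF PH.add PH.const])
      show "PH ?wt (int wa + r) (\<lambda>p. fst p * g1 (mapF p))" using PH.mul[OF xa PH_pullF[OF g1]] .
      show "PH ?wt (int wa + r) (\<lambda>p. (fst (snd p) - snd (snd p)) * g3 (mapF p))"
        by (rule PH_mul'[OF xbc PH_pullF[OF g3]]) simp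
    qed simp
    then show ?thesis unfolding u_def by simp
  qed
  have u1: "2 * fst p * u p = A0 (mapF p)" for p
  proof -
    have f1: "fst (mapF p) = fst p * fst p" "snd (snd (mapF p)) = fst p * (fst (snd p) - snd (snd p))"
      by (simp_all add: mapF_eq power2_eq_square)
    have "A0 (mapF p) = fst p * fst p * g1 (mapF p) + fst p * (fst (snd p) - snd (snd p)) * g3 (mapF p)"
      using A0eq[of "mapF p"] unfolding f1 .
    moreover have "2 * fst p * u p = fst p * fst p * g1 (mapF p) + fst p * (fst (snd p) - snd (snd p)) * g3 (mapF p)"
    proof -
      have hu: "2 * u p = fst p * g1 (mapF p) + (fst (snd p) - snd (snd p)) * g3 (mapF p)" unfolding u_def by (rule two_half)
      have "2 * fst p * u p = fst p * (2 * u p)" by (simp add: mult_ac)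
      also have "\<dots> = fst p * fst p * g1 (mapF p) + fst p * (fst (snd p) - snd (snd p)) * g3 (mapF p)"
        unfolding hu by (simp add: algebra_simps)
      finally show ?thesis .
    qed
    ultimately show ?thesis by simp
  qed
  have usig: "u (sigma p) = - u p" for p
  proof -
    have "u (sigma p) = (- fst p * g1 (mapF p) + (snd (snd p) - fst (snd p)) * g3 (mapF p)) / 2"
      unfolding u_def mapF_sigma by (simp add: sigma_eq)
    also have "\<dots> = - ((fst p * g1 (mapF p) + (fst (snd p) - snd (snd p)) * g3 (mapF p)) / 2)"
    proof -
      have "- fst p * g1 (mapF p) + (snd (snd p) - fst (snd p)) * g3 (mapF p)
          = - (fst p * g1 (mapF p) + (fst (snd p) - snd (snd p)) * g3 (mapF p))" by (simp add: algebra_simps)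
      then show ?thesis by (simp only: minus_divide_left)
    qed
    finally show ?thesis unfolding u_def by simp
  qed
  define E where "E = (\<lambda>p. C0 (mapF p) - u p * (fst (snd p) - snd (snd p)))"
  have EPH: "PH ?wt (int (e1*wa) + int wa + r) E" unfolding E_def
  proof (rule PH_sub)
    show "PH ?wt (int (e1*wa) + int wa + r) (\<lambda>p. C0 (mapF p))" using PH_pullF[OF C0] by (simp add: algebra_simps)
    show "PH ?wt (int (e1*wa) + int wa + r) (\<lambda>p. u p * (fst (snd p) - snd (snd p)))"
      by (rule PH_mul'[OF uPH xbc]) simp
  qed
  have Esig: "E (sigma p) = E p" for p
    unfolding E_def mapF_sigma usig by (simp add: sigma_eq algebra_simps)
  define RC where "RC = (\<lambda>p. of_nat e1 * fst p ^ (2*e1) * u p + (fst (snd p) - snd (snd p)) * E p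
       - fst p * (fst (snd p) + snd (snd p)) * B0 (mapF p))"
  have RCPF: "PF RC" unfolding RC_def
    using PH_PF[OF uPH] PH_PF[OF EPH] PF_pullF[OF PH_PF[OF B0]] by (intro PF_intros)
  have aRC: "fst p * RC p = 0" if p: "p \<in> surfS' e1" for p :: "'a pt3"
  proof -
    obtain a b c where abc: "p = (a,b,c)" by (cases p)
    have h: "a^(2*e1) = 4*b*c" using p abc by (simp add: memS')
    have "mapF p \<in> surfS e1" using mapF_S[OF p] .
    then have cF: "A0 (mapF p) * (of_nat (e1+1) * fst (mapF p) ^ e1 - fst (snd (mapF p)) ^ 2)
        - 2 * fst (mapF p) * fst (snd (mapF p)) * B0 (mapF p) + 2 * snd (snd (mapF p)) * C0 (mapF p) = 0"
      using cond by blast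
    have pe: "(a^2)^e1 = a^(2*e1)" by (simp add: power_mult)
    have Ap: "A0 (mapF p) = 2 * a * u p" using u1[of p] abc by simp
    have Cp: "C0 (mapF p) = E p + u p * (b - c)" unfolding E_def using abc by simp
    let ?N = "a^(2*e1)"
    have "A0 (mapF p) * (of_nat (e1+1) * fst (mapF p) ^ e1 - fst (snd (mapF p)) ^ 2)
        - 2 * fst (mapF p) * fst (snd (mapF p)) * B0 (mapF p) + 2 * snd (snd (mapF p)) * C0 (mapF p)
      = 2 * a * u p * (of_nat (e1+1) * ?N - (b+c)^2) - 2 * a^2 * (b+c) * B0 (mapF p)
        + 2 * (a * (b - c)) * (E p + u p * (b - c))"
      unfolding Ap Cp using abc pe by (simp add: mapF_eq)
    also have "\<dots> = 2 * (a * RC p) + 2 * a * u p * (?N - 4*b*c)"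
      unfolding RC_def using abc by (simp add: power2_eq_square algebra_simps)
    also have "\<dots> = 2 * (a * RC p)" using h by simp
    finally show ?thesis using cF abc by simp
  qed
  have RC0: "\<forall>p\<in>(surfS' e1 :: 'a pt3 set). RC p = 0"
    by (rule DenA[OF e RCPF]) (use aRC in auto)
  have E0: "E p = 0" if p: "p \<in> surfS' e1" "fst p = 0" for p :: "'a pt3"
  proof -
    have Eb: "E (0, b, c) = 0" if q: "(0, b, c) \<in> (surfS' e1 :: 'a pt3 set)" "b \<noteq> c" for b c
    proof -
      have "RC (0,b,c) = 0" using RC0 q by blast
      then have "(b - c) * E (0,b,c) = 0" unfolding RC_def using z by simp
      then show ?thesis using q(2) by simp
    qed
    obtain b c where abc: "p = (0,b,c)" using p by (cases p) auto
    show ?thesis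
    proof (cases "b = c")
      case False then show ?thesis using Eb abc p by blast
    next
      case True
      have "4*b*c = 0" using p abc z by (simp add: memS')
      then have bc: "b = 0" "c = 0" using True by auto
      have "E (poly 0 0, poly [:0,1:] 0, poly 0 0) = 0"
      proof (rule CL[OF EPH], intro allI impI)
        fix t :: 'a assume t: "t \<noteq> 0"
        have "(0, t, 0) \<in> (surfS' e1 :: 'a pt3 set)" using z by (simp add: memS')
        then show "E (poly 0 t, poly [:0,1:] t, poly 0 t) = 0" using Eb t by simp
      qed
      then show ?thesis using abc bc by simp
    qed
  qed
  obtain k s t g where D2: "int (e1*wa) + int wa + r \<noteq> 0 \<longrightarrow> k = 0"
     "PH ?wt (int (e1*wa) + int wa + r - int (e1*wa)) s" "\<forall>p. s p = s (0, fst (snd p), 0)"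
     "PH ?wt (int (e1*wa) + int wa + r - int (e1*wa)) t" "\<forall>p. t p = t (0, 0, snd (snd p))"
     "PH ?wt (int (e1*wa) + int wa + r - int wa) g"
     "\<forall>p\<in>(surfS' e1 :: 'a pt3 set). E p = k + fst (snd p) * s p + snd (snd p) * t p + fst p * g p"
    using DECS[OF e EPH] by blast
  have S0: "(0::'a, 0::'a, 0::'a) \<in> surfS' e1" using z by (simp add: memS')
  have k0: "k = 0" using D2(7) S0 E0[OF S0] by fastforce
  have Eg: "E p = fst p * g p" if p: "p \<in> surfS' e1" for p :: "'a pt3"
  proof -
    have sb: "fst (snd p) * s p = 0"
    proof (cases "fst (snd p) = 0")
      case False
      have q: "(0, fst (snd p), 0) \<in> (surfS' e1 :: 'a pt3 set)" using z by (simp add: memS')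
      have "E (0, fst (snd p), 0) = fst (snd p) * s (0, fst (snd p), 0)" using D2(7) q k0 by fastforce
      then have "s (0, fst (snd p), 0) = 0" using E0[OF q] False by simp
      then show ?thesis using D2(3)[rule_format, of p] by simp
    qed simp
    have tc: "snd (snd p) * t p = 0"
    proof (cases "snd (snd p) = 0")
      case False
      have q: "(0, 0, snd (snd p)) \<in> (surfS' e1 :: 'a pt3 set)" using z by (simp add: memS')
      have "E (0, 0, snd (snd p)) = snd (snd p) * t (0, 0, snd (snd p))" using D2(7) q k0 by fastforce
      then have "t (0, 0, snd (snd p)) = 0" using E0[OF q] False by simp
      then show ?thesis using D2(5)[rule_format, of p] by simp
    qed simp
    show ?thesis using D2(7) p k0 sb tc by fastforce
  qed
  have gPH: "PH ?wt (int (e1*wa) + r) g" using D2(6) by (simp add: algebra_simps)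
  define E1 where "E1 = (\<lambda>p. (g p - g (sigma p)) / 2)"
  have E1PH: "PH ?wt (int (e1*wa) + r) E1"
  proof -
    have "PH ?wt (int (e1*wa) + r + 0) (\<lambda>p. (g p - g (sigma p)) * (1/2))"
      by (rule PH.mul[OF PH_sub[OF gPH PH_pullS[OF gPH]] PH.const])
    then show ?thesis unfolding E1_def by simp
  qed
  have hE1: "2 * E1 p = g p - g (sigma p)" for p unfolding E1_def by (rule two_half)
  have E1sig: "E1 (sigma p) = - E1 p" for p
  proof -
    have "2 * E1 (sigma p) = 2 * (- E1 p)" using hE1[of "sigma p"] hE1[of p] sigma_sigma[of p] by simp
    then show ?thesis by (rule two_cancel)
  qed
  have aE1: "fst p * E1 p = E p" if p: "p \<in> surfS' e1" for p :: "'a pt3"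
  proof -
    have "E p = fst p * g p" using Eg[OF p] .
    moreover have "E p = - fst p * g (sigma p)"
      using Eg[OF sigma_S'[OF p]] Esig[of p] by (simp add: sigma_eq)
    ultimately have "2 * (fst p * E1 p) = 2 * E p"
    proof -
      assume a1: "E p = fst p * g p" and a2: "E p = - fst p * g (sigma p)"
      have "2 * (fst p * E1 p) = fst p * (2 * E1 p)" by (simp add: mult_ac)
      also have "\<dots> = fst p * g p - fst p * g (sigma p)" unfolding hE1 by (simp add: algebra_simps)
      also have "\<dots> = 2 * E p" using a1 a2 by simp
      finally show ?thesis .
    qed
    then show ?thesis by (rule two_cancel)
  qed
  define v where "v = (\<lambda>p. (B0 (mapF p) + E1 p) / 2)"
  define w where "w = (\<lambda>p. (B0 (mapF p) - E1 p) / 2)"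
  have BF: "PH ?wt (int (e1*wa) + r) (\<lambda>p. B0 (mapF p))" using PH_pullF[OF B0] .
  have vPH: "PH ?wt (int (e1*wa) + r) v"
  proof -
    have "PH ?wt (int (e1*wa) + r + 0) (\<lambda>p. (B0 (mapF p) + E1 p) * (1/2))"
      by (rule PH.mul[OF PH.add[OF BF E1PH] PH.const])
    then show ?thesis unfolding v_def by simp
  qed
  have wPH: "PH ?wt (int (e1*wa) + r) w"
  proof -
    have "PH ?wt (int (e1*wa) + r + 0) (\<lambda>p. (B0 (mapF p) - E1 p) * (1/2))"
      by (rule PH.mul[OF PH_sub[OF BF E1PH] PH.const])
    then show ?thesis unfolding w_def by simp
  qed
  have hv: "2 * v p = B0 (mapF p) + E1 p" for p unfolding v_def by (rule two_half)
  have hw: "2 * w p = B0 (mapF p) - E1 p" for p unfolding w_def by (rule two_half)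
  have vw: "v p + w p = B0 (mapF p)" for p
  proof -
    have "2 * (v p + w p) = 2 * B0 (mapF p)" using hv[of p] hw[of p] by (simp add: algebra_simps)
    then show ?thesis by (rule two_cancel)
  qed
  have C: "u p * (fst (snd p) - snd (snd p)) + fst p * (v p - w p) = C0 (mapF p)"
    if p: "p \<in> surfS' e1" for p :: "'a pt3"
  proof -
    have "2 * (v p - w p) = 2 * E1 p" using hv[of p] hw[of p] by (simp add: algebra_simps)
    then have "v p - w p = E1 p" by (rule two_cancel)
    then show ?thesis using aE1[OF p] unfolding E_def by simp
  qed
  have sig: "u (sigma p) = - u p \<and> v (sigma p) = w p \<and> w (sigma p) = v p" for p
    using usig unfolding v_def w_def mapF_sigma E1sig by simp
  \<comment> \<open>Step 8: tangency\<close>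
  define TT where "TT = (\<lambda>p. of_nat (2*e1) * fst p ^ (2*e1 - 1) * u p
            - 4 * snd (snd p) * v p - 4 * fst (snd p) * w p)"
  have TTPF: "PF TT" unfolding TT_def
    using PH_PF[OF uPH] PH_PF[OF vPH] PH_PF[OF wPH] by (intro PF_intros)
  have aTT: "fst p * TT p = 0" if p: "p \<in> surfS' e1" for p :: "'a pt3"
  proof -
    have pa: "fst p * fst p ^ (2*e1 - 1) = fst p ^ (2*e1)" using e by (simp add: power_eq_if[of "fst p" "2*e1"])
    have "fst p * TT p = 2 * (of_nat e1 * (fst p * fst p ^ (2*e1 - 1)) * u p)
         - 2 * fst p * (fst (snd p) + snd (snd p)) * B0 (mapF p) + 2 * (fst (snd p) - snd (snd p)) * (fst p * E1 p)"
    proof -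
      have "fst p * TT p = of_nat (2*e1) * (fst p * fst p ^ (2*e1 - 1)) * u p
         - 2 * fst p * snd (snd p) * (2 * v p) - 2 * fst p * fst (snd p) * (2 * w p)"
        unfolding TT_def by (simp add: algebra_simps)
      also have "\<dots> = 2 * (of_nat e1 * (fst p * fst p ^ (2*e1 - 1)) * u p)
         - 2 * fst p * (fst (snd p) + snd (snd p)) * B0 (mapF p) + 2 * (fst (snd p) - snd (snd p)) * (fst p * E1 p)"
        unfolding hv hw by (simp add: algebra_simps)
      finally show ?thesis .
    qed
    also have "\<dots> = 2 * RC p" unfolding RC_def pa aE1[OF p] by (simp add: algebra_simps)
    also have "\<dots> = 0" using RC0 p by simp
    finally show ?thesis .
  qed
  have TT0: "\<forall>p\<in>(surfS' e1 :: 'a pt3 set). TT p = 0"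
    by (rule DenA[OF e TTPF]) (use aTT in auto)
  have TT0': "\<forall>p\<in>(surfS' e1 :: 'a pt3 set). of_nat (2*e1) * fst p ^ (2*e1 - 1) * u p
            - 4 * snd (snd p) * v p - 4 * fst (snd p) * w p = 0" using TT0 unfolding TT_def by simp
  have u1': "\<forall>p\<in>(surfS' e1 :: 'a pt3 set). 2 * fst p * u p = A0 (mapF p)" using u1 by simp
  have vw': "\<forall>p\<in>(surfS' e1 :: 'a pt3 set). v p + w p = B0 (mapF p)" using vw by simp
  have C': "\<forall>p\<in>(surfS' e1 :: 'a pt3 set). u p * (fst (snd p) - snd (snd p)) + fst p * (v p - w p) = C0 (mapF p)"
    using C by simp
  have sig': "\<forall>p. u (sigma p) = - u p \<and> v (sigma p) = w p \<and> w (sigma p) = v p" using sig by simp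
  show ?thesis
    by (rule exI[of _ u], rule exI[of _ v], rule exI[of _ w], intro conjI uPH vPH wPH u1' vw' C' TT0' sig')
qed



lemma PF_x1': "PF (\<lambda>p. fst (p::'a::comm_ring_1 pt3))" by (rule PF_x1)

lemma DX1[simp]: "DD (\<lambda>x. fst x) p q = fst (q::'a::field_char_0 pt3)" by (rule DD_x1)
lemma DX2[simp]: "DD (\<lambda>x. fst (snd x)) p q = fst (snd (q::'a::field_char_0 pt3))" by (rule DD_x2)
lemma DX3[simp]: "DD (\<lambda>x. snd (snd x)) p q = snd (snd (q::'a::field_char_0 pt3))" by (rule DD_x3)

lemma DD_hh:
  fixes p q :: "'a::field_char_0 pt3"
  shows "DD (hh e1) p q = of_nat (2*e1) * fst p ^ (2*e1 - 1) * fst q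
     - 4 * snd (snd p) * fst (snd q) - 4 * fst (snd p) * snd (snd q)"
proof -
  have h: "hh e1 = (\<lambda>x. fst x ^ (2*e1) - (4 * fst (snd x)) * snd (snd x))"
    by (rule ext) (simp add: hh_def)
  have P1: "PF (\<lambda>x. fst (x::'a pt3) ^ (2*e1))" by (intro PF_intros)
  have P2: "PF (\<lambda>x. (4 * fst (snd x)) * snd (snd (x::'a pt3)))" by (intro PF_intros)
  have P3: "PF (\<lambda>x. 4 * fst (snd (x::'a pt3)))" by (intro PF_intros)
  have X1: "DD (\<lambda>x. fst x) p q = fst q" by (rule DD_x1)
  have "DD (hh e1) p q = DD (\<lambda>x. fst x ^ (2*e1)) p q - DD (\<lambda>x. (4 * fst (snd x)) * snd (snd x)) p q"
    unfolding h by (rule DD_sub[OF P1 P2])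
  also have "DD (\<lambda>x. fst x ^ (2*e1)) p q = of_nat (2*e1) * fst p ^ (2*e1 - 1) * fst q"
    using DD_pow[OF PF_x1', of "2*e1" p q] X1 by simp
  also have "DD (\<lambda>x. (4 * fst (snd x)) * snd (snd x)) p q = 4 * fst (snd p) * snd (snd q) + snd (snd p) * (4 * fst (snd q))"
    using DD_mul[OF P3 PF_x3, of p q] DX3 DD_smult[OF PF_x2, of 4 p q] DX2 by simp
  finally show ?thesis by (simp add: algebra_simps)
qed

lemma DD_H:
  fixes p q :: "'a::field_char_0 pt3"
  assumes e: "e1 \<ge> 1"
  shows "DD (\<lambda>x. snd (snd x) ^ 2 + (fst x ^ e1 - fst (snd x) ^ 2) * fst x) p q
     = fst q * (of_nat (e1+1) * fst p ^ e1 - fst (snd p) ^ 2)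
        - 2 * fst p * fst (snd p) * fst (snd q) + 2 * snd (snd p) * snd (snd q)"
proof -
  have P1: "PF (\<lambda>x. snd (snd (x::'a pt3)) ^ 2)" by (intro PF_intros)
  have P2: "PF (\<lambda>x. (fst x ^ e1 - fst (snd x) ^ 2) * fst (x::'a pt3))" by (intro PF_intros)
  have P3: "PF (\<lambda>x. fst x ^ e1 - fst (snd (x::'a pt3)) ^ 2)" by (intro PF_intros)
  have P4: "PF (\<lambda>x. fst (x::'a pt3) ^ e1)" by (intro PF_intros)
  have P5: "PF (\<lambda>x. fst (snd (x::'a pt3)) ^ 2)" by (intro PF_intros)
  have d1: "DD (\<lambda>x. snd (snd x) ^ 2) p q = 2 * snd (snd p) * snd (snd q)"
    using DD_pow[OF PF_x3, of 2 p q] DX3 by simp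
  have d4: "DD (\<lambda>x. fst x ^ e1) p q = of_nat e1 * fst p ^ (e1 - 1) * fst q"
    using DD_pow[OF PF_x1', of e1 p q] DX1 by simp
  have d5: "DD (\<lambda>x. fst (snd x) ^ 2) p q = 2 * fst (snd p) * fst (snd q)"
    using DD_pow[OF PF_x2, of 2 p q] DX2 by simp
  have d3: "DD (\<lambda>x. fst x ^ e1 - fst (snd x) ^ 2) p q = of_nat e1 * fst p ^ (e1 - 1) * fst q - 2 * fst (snd p) * fst (snd q)"
    using DD_sub[OF P4 P5, of p q] d4 d5 by simp
  have d2: "DD (\<lambda>x. (fst x ^ e1 - fst (snd x) ^ 2) * fst x) p q
      = (fst p ^ e1 - fst (snd p) ^ 2) * fst q + fst p * (of_nat e1 * fst p ^ (e1 - 1) * fst q - 2 * fst (snd p) * fst (snd q))"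
    using DD_mul[OF P3 PF_x1', of p q] d3 DX1 by (simp add: algebra_simps)
  have pe: "fst p * fst p ^ (e1 - 1) = fst p ^ e1" using e by (simp add: power_eq_if[of "fst p" e1])
  have "DD (\<lambda>x. snd (snd x) ^ 2 + (fst x ^ e1 - fst (snd x) ^ 2) * fst x) p q
      = 2 * snd (snd p) * snd (snd q) + ((fst p ^ e1 - fst (snd p) ^ 2) * fst q + fst p * (of_nat e1 * fst p ^ (e1 - 1) * fst q - 2 * fst (snd p) * fst (snd q)))"
    using DD_add[OF P1 P2, of p q] d1 d2 by simp
  also have "\<dots> = 2 * snd (snd p) * snd (snd q) + ((fst p ^ e1 - fst (snd p) ^ 2) * fst q + of_nat e1 * (fst p * fst p ^ (e1 - 1)) * fst q - 2 * fst p * fst (snd p) * fst (snd q))"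
    by (simp add: algebra_simps)
  also have "\<dots> = fst q * (of_nat (e1+1) * fst p ^ e1 - fst (snd p) ^ 2)
        - 2 * fst p * fst (snd p) * fst (snd q) + 2 * snd (snd p) * snd (snd q)"
    unfolding pe by (simp add: algebra_simps)
  finally show ?thesis .
qed



lemma DD_congS:
  fixes f g :: "'a::field_char_0 pt3 \<Rightarrow> 'a"
  assumes "PF f" "PF g" "\<forall>p\<in>surfS' e1. f p = g p" "e1 \<ge> 1"
    and V: "PF u" "PF v" "PF w"
    and T: "\<forall>p\<in>(surfS' e1 :: 'a pt3 set). DD (hh e1) p (u p, v p, w p) = 0"
  shows "\<forall>p\<in>(surfS' e1 :: 'a pt3 set). DD f p (u p, v p, w p) = DD g p (u p, v p, w p)"
proof -
  have "\<forall>p\<in>(surfS' e1 :: 'a pt3 set). DD (\<lambda>x. f x - g x) p (u p, v p, w p) = 0"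
    by (rule KL[OF assms(4) PF_sub[OF assms(1,2)] _ V T]) (use assms(3) in auto)
  then show ?thesis using DD_sub[OF assms(1,2)] by simp
qed

lemma restr_eqI: "(\<And>p. p \<in> S \<Longrightarrow> f p = g p) \<Longrightarrow> restr S f = restr S g"
  unfolding restr_def by auto

theorem lemma11:
  fixes D :: "('a::{alg_closed_field, field_char_0} pt3 \<Rightarrow> 'a) \<Rightarrow> ('a pt3 \<Rightarrow> 'a)"
    and e1 :: nat
  assumes e1: "e1 \<ge> 3" "odd e1"
    and D: "is_derivation (surfS e1) D"
  shows "\<exists>D'. is_derivation (surfS' e1) D'
           \<and> (\<forall>f\<in>coord_ring (surfS' e1). D' (sigma_star e1 f) = sigma_star e1 (D' f))
           \<and> (\<forall>f\<in>coord_ring (surfS e1). D' (F_star e1 f) = F_star e1 (D f))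
           \<and> (\<forall>D''. is_derivation (surfS' e1) D''
                  \<and> (\<forall>f\<in>coord_ring (surfS' e1). D'' (sigma_star e1 f) = sigma_star e1 (D'' f))
                  \<and> (\<forall>f\<in>coord_ring (surfS e1). D'' (F_star e1 f) = F_star e1 (D f))
                  \<longrightarrow> (\<forall>f\<in>coord_ring (surfS' e1). D'' f = D' f))
           \<and> (whom_derivation (surfS e1) (2, e1, e1 + 1) D
                  \<longrightarrow> whom_derivation (surfS' e1) (1, e1, e1) D')"
proof -
  have e: "e1 \<ge> 1" using e1 by simp
  let ?S = "surfS e1 :: 'a pt3 set" and ?S' = "surfS' e1 :: 'a pt3 set"
  define a where "a = D (restr ?S (\<lambda>p. fst p))"
  define b where "b = D (restr ?S (\<lambda>p. fst (snd p)))"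
  define c where "c = D (restr ?S (\<lambda>p. snd (snd p)))"
  have Dcr: "\<forall>f\<in>coord_ring ?S. D f \<in> coord_ring ?S" using D unfolding is_derivation_def by blast
  have abc_cr: "a \<in> coord_ring ?S" "b \<in> coord_ring ?S" "c \<in> coord_ring ?S"
    unfolding a_def b_def c_def using Dcr restr_in[OF PF_x1] restr_in[OF PF_x2] restr_in[OF PF_x3] by blast+
  have Dform: "D (restr ?S f) = restr ?S (\<lambda>p. DD f p (a p, b p, c p))" if "PF f" for f
    unfolding a_def b_def c_def by (rule deriv_formula[OF D that])
  have reps: "\<exists>wa r A0 B0 C0. PH (2*wa, e1*wa, e1*wa+wa) (int (2*wa) + r) A0
      \<and> PH (2*wa, e1*wa, e1*wa+wa) (int (e1*wa) + r) B0
      \<and> PH (2*wa, e1*wa, e1*wa+wa) (int (e1*wa+wa) + r) C0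
      \<and> a = restr ?S A0 \<and> b = restr ?S B0 \<and> c = restr ?S C0
      \<and> (whom_derivation ?S (2, e1, e1 + 1) D \<longrightarrow> wa = 1)"
  proof (cases "whom_derivation ?S (2, e1, e1 + 1) D")
    case True
    then obtain r where r: "\<forall>m f. whom ?S (2, e1, e1 + 1) m f \<longrightarrow> whom ?S (2, e1, e1 + 1) (m + r) (D f)"
      unfolding whom_derivation_def by blast
    have "whom ?S (2, e1, e1 + 1) 2 (restr ?S (\<lambda>p. fst p))"
      unfolding whom_iff by (intro exI[of _ "\<lambda>p. fst p"] conjI PH_x1) simp_all
    then obtain A0 where A: "PH (2, e1, e1 + 1) (2 + r) A0" "a = restr ?S A0"
      using r unfolding a_def whom_iff by blast
    have "whom ?S (2, e1, e1 + 1) (int e1) (restr ?S (\<lambda>p. fst (snd p)))"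
      unfolding whom_iff by (intro exI[of _ "\<lambda>p. fst (snd p)"] conjI PH_x2) simp_all
    then obtain B0 where B: "PH (2, e1, e1 + 1) (int e1 + r) B0" "b = restr ?S B0"
      using r unfolding b_def whom_iff by blast
    have "whom ?S (2, e1, e1 + 1) (int (e1+1)) (restr ?S (\<lambda>p. snd (snd p)))"
      unfolding whom_iff by (intro exI[of _ "\<lambda>p. snd (snd p)"] conjI PH_x3) simp_all
    then obtain C0 where C: "PH (2, e1, e1 + 1) (int (e1+1) + r) C0" "c = restr ?S C0"
      using r unfolding c_def whom_iff by blast
    show ?thesis
      by (rule exI[of _ 1], rule exI[of _ r], rule exI[of _ A0], rule exI[of _ B0], rule exI[of _ C0])
         (use A B C in simp)
  next
    case False
    obtain A0 where A: "PF A0" "a = restr ?S A0" using abc_cr coord_ring_iff by blast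
    obtain B0 where B: "PF B0" "b = restr ?S B0" using abc_cr coord_ring_iff by blast
    obtain C0 where C: "PF C0" "c = restr ?S C0" using abc_cr coord_ring_iff by blast
    show ?thesis
      by (rule exI[of _ 0], rule exI[of _ 0], rule exI[of _ A0], rule exI[of _ B0], rule exI[of _ C0])
         (use A B C False in simp)
  qed
  then obtain wa r A0 B0 C0 where R: "PH (2*wa, e1*wa, e1*wa+wa) (int (2*wa) + r) A0"
      "PH (2*wa, e1*wa, e1*wa+wa) (int (e1*wa) + r) B0"
      "PH (2*wa, e1*wa, e1*wa+wa) (int (e1*wa+wa) + r) C0"
      "a = restr ?S A0" "b = restr ?S B0" "c = restr ?S C0"
      "whom_derivation ?S (2, e1, e1 + 1) D \<longrightarrow> wa = 1" by blast
  have PA: "PF A0" "PF B0" "PF C0" using R(1-3) PH_PF by blast+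
  define H where "H = (\<lambda>x. snd (snd x) ^ 2 + (fst x ^ e1 - fst (snd x) ^ 2) * (fst x :: 'a))"
  have PH_H: "PF H" unfolding H_def by (intro PF_intros)
  have "restr ?S H = restr ?S (\<lambda>_. 0)" unfolding restr_def H_def by (auto simp: surfS_def)
  then have "restr ?S (\<lambda>p. DD H p (a p, b p, c p)) = restr ?S (\<lambda>p. DD (\<lambda>_. 0) p (a p, b p, c p))"
    using Dform[OF PH_H] Dform[OF PF_const] by simp
  then have DH0: "DD H x (a x, b x, c x) = 0" if "x \<in> ?S" for x
    using that DD_const[where 'a='a] unfolding restr_def by metis
  have cond: "\<forall>x\<in>?S. A0 x * (of_nat (e1+1) * fst x ^ e1 - fst (snd x) ^ 2)
        - 2 * fst x * fst (snd x) * B0 x + 2 * snd (snd x) * C0 x = 0"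
  proof
    fix x assume x: "x \<in> ?S"
    have "a x = A0 x" "b x = B0 x" "c x = C0 x" using R(4-6) x by (simp_all add: restr_def)
    then show "A0 x * (of_nat (e1+1) * fst x ^ e1 - fst (snd x) ^ 2)
        - 2 * fst x * fst (snd x) * B0 x + 2 * snd (snd x) * C0 x = 0"
      using DH0[OF x] DD_H[OF e, of x "(a x, b x, c x)"] unfolding H_def by simp
  qed
  obtain u v w where U: "PH (wa, e1*wa, e1*wa) (int wa + r) u" "PH (wa, e1*wa, e1*wa) (int (e1*wa) + r) v"
     "PH (wa, e1*wa, e1*wa) (int (e1*wa) + r) w"
     "\<forall>p\<in>?S'. 2 * fst p * u p = A0 (mapF p)"
     "\<forall>p\<in>?S'. v p + w p = B0 (mapF p)"
     "\<forall>p\<in>?S'. u p * (fst (snd p) - snd (snd p)) + fst p * (v p - w p) = C0 (mapF p)"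
     "\<forall>p\<in>?S'. of_nat (2*e1) * fst p ^ (2*e1 - 1) * u p - 4 * snd (snd p) * v p - 4 * fst (snd p) * w p = 0"
     "\<forall>p. u (sigma p) = - u p \<and> v (sigma p) = w p \<and> w (sigma p) = v p"
    using construct[OF e R(1-3) cond] by blast
  have PU: "PF u" "PF v" "PF w" using U(1-3) PH_PF by blast+
  have T: "\<forall>p\<in>?S'. DD (hh e1) p (u p, v p, w p) = 0" using U(7) by (simp add: DD_hh)
  define rep where "rep = (\<lambda>g. SOME f. PF f \<and> g = restr ?S' f)"
  define D' where "D' = (\<lambda>g. restr ?S' (\<lambda>p. DD (rep g) p (u p, v p, w p)))"
  have D'eq: "D' (restr ?S' f) = restr ?S' (\<lambda>p. DD f p (u p, v p, w p))" if f: "PF f" for f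
  proof -
    have ex: "\<exists>f'. PF f' \<and> restr ?S' f = restr ?S' f'" using f by blast
    have r: "PF (rep (restr ?S' f)) \<and> restr ?S' f = restr ?S' (rep (restr ?S' f))"
      unfolding rep_def by (rule someI_ex[OF ex])
    have eqS: "\<forall>p\<in>?S'. rep (restr ?S' f) p = f p"
      using r unfolding restr_def by (metis)
    have "\<forall>p\<in>?S'. DD (rep (restr ?S' f)) p (u p, v p, w p) = DD f p (u p, v p, w p)"
      by (rule DD_congS[OF _ f eqS e PU T]) (use r in blast)
    then show ?thesis unfolding D'_def by (intro restr_eqI) auto
  qed
  have cr': "g \<in> coord_ring ?S' \<longleftrightarrow> (\<exists>f. PF f \<and> g = restr ?S' f)" for g by (rule coord_ring_iff)
  have isD': "is_derivation ?S' D'"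
    unfolding is_derivation_def
  proof (intro conjI ballI allI)
    fix f assume "f \<in> coord_ring ?S'"
    then obtain f0 where f0: "PF f0" "f = restr ?S' f0" using cr' by blast
    show "D' f \<in> coord_ring ?S'" unfolding f0(2) D'eq[OF f0(1)]
      by (rule restr_in[OF PF_DD[OF f0(1) PU]])
  next
    fix f g assume "f \<in> coord_ring ?S'" "g \<in> coord_ring ?S'"
    then obtain f0 g0 where f0: "PF f0" "f = restr ?S' f0" and g0: "PF g0" "g = restr ?S' g0" using cr' by blast
    have "(\<lambda>p. f p + g p) = restr ?S' (\<lambda>p. f0 p + g0 p)" unfolding f0(2) g0(2) restr_add ..
    then have "D' (\<lambda>p. f p + g p) = restr ?S' (\<lambda>p. DD (\<lambda>x. f0 x + g0 x) p (u p, v p, w p))"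
      using D'eq[OF PF_add[OF f0(1) g0(1)]] by simp
    also have "\<dots> = restr ?S' (\<lambda>p. DD f0 p (u p, v p, w p) + DD g0 p (u p, v p, w p))"
      by (simp only: DD_add[OF f0(1) g0(1)])
    also have "\<dots> = (\<lambda>p. D' f p + D' g p)"
      unfolding f0(2) g0(2) D'eq[OF f0(1)] D'eq[OF g0(1)] restr_add ..
    finally show "D' (\<lambda>p. f p + g p) = (\<lambda>p. D' f p + D' g p)" .
  next
    fix k f assume "f \<in> coord_ring ?S'"
    then obtain f0 where f0: "PF f0" "f = restr ?S' f0" using cr' by blast
    have "(\<lambda>p. k * f p) = restr ?S' (\<lambda>p. k * f0 p)" unfolding f0(2) restr_smult ..
    then have "D' (\<lambda>p. k * f p) = restr ?S' (\<lambda>p. DD (\<lambda>x. k * f0 x) p (u p, v p, w p))"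
      using D'eq[OF PF_mul[OF PF_const f0(1)]] by simp
    also have "\<dots> = restr ?S' (\<lambda>p. k * DD f0 p (u p, v p, w p))"
      by (simp only: DD_smult[OF f0(1)])
    also have "\<dots> = (\<lambda>p. k * D' f p)"
      unfolding f0(2) D'eq[OF f0(1)] restr_smult ..
    finally show "D' (\<lambda>p. k * f p) = (\<lambda>p. k * D' f p)" .
  next
    fix f g assume "f \<in> coord_ring ?S'" "g \<in> coord_ring ?S'"
    then obtain f0 g0 where f0: "PF f0" "f = restr ?S' f0" and g0: "PF g0" "g = restr ?S' g0" using cr' by blast
    have "(\<lambda>p. f p * g p) = restr ?S' (\<lambda>p. f0 p * g0 p)" unfolding f0(2) g0(2) restr_mul ..
    then have "D' (\<lambda>p. f p * g p) = restr ?S' (\<lambda>p. DD (\<lambda>x. f0 x * g0 x) p (u p, v p, w p))"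
      using D'eq[OF PF_mul[OF f0(1) g0(1)]] by simp
    also have "\<dots> = restr ?S' (\<lambda>p. f0 p * DD g0 p (u p, v p, w p) + g0 p * DD f0 p (u p, v p, w p))"
      by (simp only: DD_mul[OF f0(1) g0(1)])
    also have "\<dots> = (\<lambda>p. f p * D' g p + g p * D' f p)"
      unfolding f0(2) g0(2) D'eq[OF f0(1)] D'eq[OF g0(1)] restr_add restr_mul ..
    finally show "D' (\<lambda>p. f p * g p) = (\<lambda>p. f p * D' g p + g p * D' f p)" .
  qed
  have sigD': "\<forall>f\<in>coord_ring ?S'. D' (sigma_star e1 f) = sigma_star e1 (D' f)"
  proof
    fix f assume "f \<in> coord_ring ?S'"
    then obtain f0 where f0: "PF f0" "f = restr ?S' f0" using cr' by blast
    have Pm: "PF (\<lambda>x. - fst (x::'a pt3))" by (intro PF_intros)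
    have fs: "(\<lambda>x. f0 (sigma x)) = (\<lambda>x. f0 (- fst x, snd (snd x), fst (snd x)))" by (simp add: sigma_eq)
    have Ps: "PF (\<lambda>x. f0 (sigma x))" using PF_pullS[OF f0(1)] .
    have "sigma_star e1 f = restr ?S' (\<lambda>x. f0 (sigma x))"
      unfolding sigma_star_def f0(2) by (rule restr_eqI) (simp add: restr_def sigma_S')
    then have "D' (sigma_star e1 f) = restr ?S' (\<lambda>p. DD (\<lambda>x. f0 (sigma x)) p (u p, v p, w p))"
      using D'eq[OF Ps] by simp
    also have "\<dots> = restr ?S' (\<lambda>p. DD f0 (sigma p) (u (sigma p), v (sigma p), w (sigma p)))"
    proof (rule restr_eqI)
      fix p assume "p \<in> ?S'"
      have "DD (\<lambda>x. f0 (sigma x)) p (u p, v p, w p) = DD f0 (sigma p) (- u p, w p, v p)"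
        unfolding fs using DD_chain[OF f0(1) Pm PF_x3 PF_x2, of p "(u p, v p, w p)"] DD_neg[OF PF_x1', of p "(u p, v p, w p)"]
        by (simp add: sigma_eq)
      then show "DD (\<lambda>x. f0 (sigma x)) p (u p, v p, w p) = DD f0 (sigma p) (u (sigma p), v (sigma p), w (sigma p))"
        using U(8)[rule_format, of p] by simp
    qed
    also have "\<dots> = sigma_star e1 (D' f)"
      unfolding sigma_star_def f0(2) D'eq[OF f0(1)] by (rule restr_eqI) (simp add: restr_def sigma_S')
    finally show "D' (sigma_star e1 f) = sigma_star e1 (D' f)" .
  qed
  have PG: "PF (\<lambda>x. fst (x::'a pt3) ^ 2)" "PF (\<lambda>x. fst (snd (x::'a pt3)) + snd (snd x))"
    "PF (\<lambda>x. fst (x::'a pt3) * (fst (snd x) - snd (snd x)))" by (intro PF_intros)+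
  have dG: "DD (\<lambda>x. fst x ^ 2) p q = 2 * fst p * fst q"
    "DD (\<lambda>x. fst (snd x) + snd (snd x)) p q = fst (snd q) + snd (snd q)"
    "DD (\<lambda>x. fst x * (fst (snd x) - snd (snd x))) p q = fst p * (fst (snd q) - snd (snd q)) + (fst (snd p) - snd (snd p)) * fst q"
    for p q :: "'a pt3"
  proof -
    show "DD (\<lambda>x. fst x ^ 2) p q = 2 * fst p * fst q" using DD_pow[OF PF_x1', of 2 p q] by simp
    show "DD (\<lambda>x. fst (snd x) + snd (snd x)) p q = fst (snd q) + snd (snd q)" using DD_add[OF PF_x2 PF_x3, of p q] by simp
    have "PF (\<lambda>x. fst (snd (x::'a pt3)) - snd (snd x))" by (intro PF_intros)
    then show "DD (\<lambda>x. fst x * (fst (snd x) - snd (snd x))) p q = fst p * (fst (snd q) - snd (snd q)) + (fst (snd p) - snd (snd p)) * fst q"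
      using DD_mul[OF PF_x1' \<open>PF (\<lambda>x. fst (snd x) - snd (snd x))\<close>, of p q] DD_sub[OF PF_x2 PF_x3, of p q] by simp
  qed
  have Fst: "F_star e1 (restr ?S f0) = restr ?S' (\<lambda>p. f0 (mapF p))" for f0
    unfolding F_star_def by (rule restr_eqI) (simp add: restr_def mapF_S)
  have FD': "\<forall>f\<in>coord_ring ?S. D' (F_star e1 f) = F_star e1 (D f)"
  proof
    fix f assume "f \<in> coord_ring ?S"
    then obtain f0 where f0: "PF f0" "f = restr ?S f0" using coord_ring_iff by blast
    have fm: "(\<lambda>x. f0 (mapF x)) = (\<lambda>x. f0 (fst x ^ 2, fst (snd x) + snd (snd x), fst x * (fst (snd x) - snd (snd x))))"
      by (simp add: mapF_eq)
    have "D' (F_star e1 f) = restr ?S' (\<lambda>p. DD (\<lambda>x. f0 (mapF x)) p (u p, v p, w p))"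
      unfolding f0(2) Fst using D'eq[OF PF_pullF[OF f0(1)]] .
    also have "\<dots> = restr ?S' (\<lambda>p. DD f0 (mapF p) (A0 (mapF p), B0 (mapF p), C0 (mapF p)))"
    proof (rule restr_eqI)
      fix p assume p: "p \<in> ?S'"
      have "DD (\<lambda>x. f0 (mapF x)) p (u p, v p, w p) = DD f0 (mapF p)
          (2 * fst p * u p, v p + w p, fst p * (v p - w p) + (fst (snd p) - snd (snd p)) * u p)"
        unfolding fm using DD_chain[OF f0(1) PG, of p "(u p, v p, w p)"] dG by (simp add: mapF_eq)
      also have "\<dots> = DD f0 (mapF p) (A0 (mapF p), B0 (mapF p), C0 (mapF p))"
        using U(4-6) p by (simp add: algebra_simps)
      finally show "DD (\<lambda>x. f0 (mapF x)) p (u p, v p, w p) = DD f0 (mapF p) (A0 (mapF p), B0 (mapF p), C0 (mapF p))" .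
    qed
    also have "\<dots> = F_star e1 (D f)"
      unfolding f0(2) Dform[OF f0(1)] F_star_def
      by (rule restr_eqI) (simp add: restr_def mapF_S R(4-6))
    finally show "D' (F_star e1 f) = F_star e1 (D f)" .
  qed
  have uniq: "\<forall>f\<in>coord_ring ?S'. D'' f = D' f"
    if D'': "is_derivation ?S' D''" and FD'': "\<forall>f\<in>coord_ring ?S. D'' (F_star e1 f) = F_star e1 (D f)" for D''
  proof -
    define a2 where "a2 = D'' (restr ?S' (\<lambda>p. fst p))"
    define b2 where "b2 = D'' (restr ?S' (\<lambda>p. fst (snd p)))"
    define c2 where "c2 = D'' (restr ?S' (\<lambda>p. snd (snd p)))"
    have Dcr2: "\<forall>f\<in>coord_ring ?S'. D'' f \<in> coord_ring ?S'" using D'' unfolding is_derivation_def by blast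
    have "a2 \<in> coord_ring ?S'" "b2 \<in> coord_ring ?S'" "c2 \<in> coord_ring ?S'"
      unfolding a2_def b2_def c2_def using Dcr2 restr_in[OF PF_x1] restr_in[OF PF_x2] restr_in[OF PF_x3] by blast+
    then obtain ga gb gc where G: "PF ga" "a2 = restr ?S' ga" "PF gb" "b2 = restr ?S' gb" "PF gc" "c2 = restr ?S' gc"
      using cr' by meson
    have D2form: "D'' (restr ?S' f) = restr ?S' (\<lambda>p. DD f p (a2 p, b2 p, c2 p))" if "PF f" for f
      unfolding a2_def b2_def c2_def by (rule deriv_formula[OF D'' that])
    have FDg: "D'' (F_star e1 (restr ?S g)) = F_star e1 (D (restr ?S g))" if "PF g" for g
      using FD'' restr_in[OF that] by blast
    have pw: "\<forall>p\<in>?S'. f1 p = f2 p" if "restr ?S' f1 = restr ?S' f2" for f1 f2 :: "'a pt3 \<Rightarrow> 'a"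
      using that unfolding restr_def by (metis)
    have FA: "\<forall>p\<in>?S'. 2 * fst p * a2 p = A0 (mapF p)"
    proof -
      have "F_star e1 (restr ?S (\<lambda>p. fst p)) = restr ?S' (\<lambda>p. fst p ^ 2)" unfolding Fst by (simp add: mapF_eq)
      moreover have "D (restr ?S (\<lambda>p. fst p)) = restr ?S A0" using R(4) a_def by simp
      ultimately have "restr ?S' (\<lambda>p. DD (\<lambda>x. fst x ^ 2) p (a2 p, b2 p, c2 p)) = restr ?S' (\<lambda>p. A0 (mapF p))"
        using FDg[OF PF_x1] D2form[OF PG(1)] Fst by simp
      then show ?thesis using pw dG(1) by simp
    qed
    have FB: "\<forall>p\<in>?S'. b2 p + c2 p = B0 (mapF p)"
    proof -
      have "F_star e1 (restr ?S (\<lambda>p. fst (snd p))) = restr ?S' (\<lambda>p. fst (snd p) + snd (snd p))" unfolding Fst by (simp add: mapF_eq)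
      moreover have "D (restr ?S (\<lambda>p. fst (snd p))) = restr ?S B0" using R(5) b_def by simp
      ultimately have "restr ?S' (\<lambda>p. DD (\<lambda>x. fst (snd x) + snd (snd x)) p (a2 p, b2 p, c2 p)) = restr ?S' (\<lambda>p. B0 (mapF p))"
        using FDg[OF PF_x2] D2form[OF PG(2)] Fst by simp
      then show ?thesis using pw dG(2) by simp
    qed
    have FC: "\<forall>p\<in>?S'. fst p * (b2 p - c2 p) + (fst (snd p) - snd (snd p)) * a2 p = C0 (mapF p)"
    proof -
      have "F_star e1 (restr ?S (\<lambda>p. snd (snd p))) = restr ?S' (\<lambda>p. fst p * (fst (snd p) - snd (snd p)))" unfolding Fst by (simp add: mapF_eq)
      moreover have "D (restr ?S (\<lambda>p. snd (snd p))) = restr ?S C0" using R(6) c_def by simp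
      ultimately have "restr ?S' (\<lambda>p. DD (\<lambda>x. fst x * (fst (snd x) - snd (snd x))) p (a2 p, b2 p, c2 p)) = restr ?S' (\<lambda>p. C0 (mapF p))"
        using FDg[OF PF_x3] D2form[OF PG(3)] Fst by simp
      then show ?thesis using pw dG(3) by simp
    qed
    have ga_eq: "\<forall>p\<in>?S'. ga p = a2 p" "\<forall>p\<in>?S'. gb p = b2 p" "\<forall>p\<in>?S'. gc p = c2 p"
      using G by (simp_all add: restr_def)
    have Au: "\<forall>p\<in>?S'. ga p - u p = 0"
    proof (rule DenA[OF e PF_sub[OF G(1) PU(1)]], intro ballI impI)
      fix p assume p: "p \<in> ?S'" and a: "fst p \<noteq> 0"
      have "2 * fst p * a2 p = 2 * fst p * u p" using FA U(4) p by simp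
      then show "ga p - u p = 0" using a ga_eq p by simp
    qed
    have au: "\<forall>p\<in>?S'. a2 p = u p" using Au ga_eq by simp
    have Bu: "\<forall>p\<in>?S'. (gb p - gc p) - (v p - w p) = 0"
    proof (rule DenA[OF e PF_sub[OF PF_sub[OF G(3) G(5)] PF_sub[OF PU(2) PU(3)]]], intro ballI impI)
      fix p assume p: "p \<in> ?S'" and a: "fst p \<noteq> 0"
      have c1: "fst p * (b2 p - c2 p) + (fst (snd p) - snd (snd p)) * u p = C0 (mapF p)"
        using FC p au by simp
      have c2: "u p * (fst (snd p) - snd (snd p)) + fst p * (v p - w p) = C0 (mapF p)"
        using U(6) p by blast
      have "fst p * (b2 p - c2 p) = C0 (mapF p) - (fst (snd p) - snd (snd p)) * u p"
        unfolding c1[symmetric] by simp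
      also have "\<dots> = fst p * (v p - w p)"
        unfolding c2[symmetric] by (simp add: algebra_simps)
      finally have "fst p * (b2 p - c2 p) = fst p * (v p - w p)" .
      then show "(gb p - gc p) - (v p - w p) = 0" using a ga_eq p by simp
    qed
    have bv: "\<forall>p\<in>?S'. b2 p = v p \<and> c2 p = w p"
    proof
      fix p assume p: "p \<in> ?S'"
      have s1: "b2 p + c2 p = v p + w p" using FB U(5) p by simp
      have s2: "b2 p - c2 p = v p - w p" using Bu ga_eq p by simp
      have "2 * b2 p = (b2 p + c2 p) + (b2 p - c2 p)" by simp
      also have "\<dots> = (v p + w p) + (v p - w p)" using s1 s2 by simp
      also have "\<dots> = 2 * v p" by simp
      finally have "2 * b2 p = 2 * v p" .
      then have "b2 p = v p" by simp
      then show "b2 p = v p \<and> c2 p = w p" using s1 by simp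
    qed
    show ?thesis
    proof
      fix f assume "f \<in> coord_ring ?S'"
      then obtain f0 where f0: "PF f0" "f = restr ?S' f0" using cr' by blast
      show "D'' f = D' f" unfolding f0(2) D2form[OF f0(1)] D'eq[OF f0(1)]
        by (rule restr_eqI) (use au bv in simp)
    qed
  qed
  have hom: "whom_derivation ?S' (1, e1, e1) D'" if H: "whom_derivation ?S (2, e1, e1 + 1) D"
  proof -
    have wa: "wa = 1" using R(7) H by blast
    have u1: "PH (1, e1, e1) (int (fst (1::nat, e1, e1)) + r) u" using U(1) wa by simp
    have v1: "PH (1, e1, e1) (int (fst (snd (1::nat, e1, e1))) + r) v" using U(2) wa by simp
    have w1: "PH (1, e1, e1) (int (snd (snd (1::nat, e1, e1))) + r) w" using U(3) wa by simp
    show ?thesis unfolding whom_derivation_def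
    proof (intro exI[of _ r] allI impI)
      fix m f assume "whom ?S' (1, e1, e1) m f"
      then obtain g where g: "PH (1, e1, e1) m g" "f = restr ?S' g" unfolding whom_iff by blast
      have "D' f = restr ?S' (\<lambda>p. DD g p (u p, v p, w p))" unfolding g(2) by (rule D'eq[OF PH_PF[OF g(1)]])
      moreover have "PH (1, e1, e1) (m + r) (\<lambda>p. DD g p (u p, v p, w p))" by (rule PH_DD[OF g(1) u1 v1 w1])
      ultimately show "whom ?S' (1, e1, e1) (m + r) (D' f)" unfolding whom_iff by blast
    qed
  qed
  show ?thesis
    apply (rule exI[of _ D'])
    using isD' sigD' FD' uniq hom by blast
qed



end
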